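(* Let $(\mu,\nu)\in\boldsymbol{\mathcal P}$ with common mean $m$, and consider the RRU with initial composition $(x,y)\in\mathbb S$, $D_n=X_n+Y_n$. Then for all $k=1,2,\dots$, $$\mathbb E\Big(\frac1{D_k}\Big)\le\frac{1+(\beta-m)/D_0}{D_0+m(k-1)+\beta}.$$ If in addition $D_0\ge2\beta$, then for all $k,n=1,2,\dots$ and all $d\ge c\ge0$, $$\Big|\mathbb E\Big(\frac1{c+D_{k+n}}-\frac1{d+D_{k+n}}\,\Big|\,\mathcal A_n\Big)\Big|\le\frac{\beta-m+d}{m}\Big(\frac1{b_k}-\frac1{b_{k+1}}\Big),$$ where $b_k=c+D_n-\beta+mk$.
   Context: Fix $0<m_0\le\beta<\infty$. $\boldsymbol{\mathcal P}$: pairs $(\mu,\nu)$ of probability measures on $[0,\beta]$ with $\int k\,\mu(dk)=\int k\,\nu(dk)=m\ge m_0$. $\mathbb S=[0,\infty)^2\setminus\{(0,0)\}$. RRU: with $\{U_n\}$ i.i.d. uniform$[0,1]$ independent of i.i.d. $\{(V_n,W_n)\}$ with uniform$[0,1]$ marginals, $R_X(n)=q_\mu(V_n)$, $R_Y(n)=q_\nu(W_n)$ (quantile functions), $X_0=x,Y_0=y$, $X_{n+1}=X_n+R_X(n+1)\mathbb I(n+1)$, $Y_{n+1}=Y_n+R_Y(n+1)(1-\mathbb I(n+1))$, $\mathbb I(n+1)=\mathbf 1\{U_{n+1}\le X_n/(X_n+Y_n)\}$. $\mathcal A_n=\sigma(\mathbb I(1),R_X(1),R_Y(1),\dots,\mathbb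 I(n),R_X(n),R_Y(n))$. *)

theory Defs
  imports "HOL-Probability.Probability"
begin

definition quantile_fn :: "real measure \<Rightarrow> real \<Rightarrow> real" where
  "quantile_fn \<mu> v = Inf {t. v \<le> measure \<mu> {..t}}"

text \<open>The randomized response urn (RRU). Composition (X_n, Y_n) as a function
  of the sample point; U, V, W are indexed by 1,2,... (index 0 unused).\<close>
fun rru :: "real measure \<Rightarrow> real measure \<Rightarrow> real \<Rightarrow> real \<Rightarrow>
    (nat \<Rightarrow> 'w \<Rightarrow> real) \<Rightarrow> (nat \<Rightarrow> 'w \<Rightarrow> real) \<Rightarrow> (nat \<Rightarrow> 'w \<Rightarrow> real) \<Rightarrow>
    nat \<Rightarrow> 'w \<Rightarrow> real \<times> real" where
  "rru \<mu> \<nu> x y U V W 0 \<omega> = (x, y)"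
| "rru \<mu> \<nu> x y U V W (Suc n) \<omega> =
     (let (X, Y) = rru \<mu> \<nu> x y U V W n \<omega>;
          I = (U (Suc n) \<omega> \<le> X / (X + Y))
      in (X + (if I then quantile_fn \<mu> (V (Suc n) \<omega>) else 0),
          Y + (if I then 0 else quantile_fn \<nu> (W (Suc n) \<omega>))))"

definition rru_ind :: "real measure \<Rightarrow> real measure \<Rightarrow> real \<Rightarrow> real \<Rightarrow>
    (nat \<Rightarrow> 'w \<Rightarrow> real) \<Rightarrow> (nat \<Rightarrow> 'w \<Rightarrow> real) \<Rightarrow> (nat \<Rightarrow> 'w \<Rightarrow> real) \<Rightarrow>
    nat \<Rightarrow> 'w \<Rightarrow> bool" where
  "rru_ind \<mu> \<nu> x y U V W n \<omega> =
     (case rru \<mu> \<nu> x y U V W (n - 1) \<omega> of (X, Y) \<Rightarrow> U n \<omega> \<le> X / (X + Y))"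

definition rru_D :: "real measure \<Rightarrow> real measure \<Rightarrow> real \<Rightarrow> real \<Rightarrow>
    (nat \<Rightarrow> 'w \<Rightarrow> real) \<Rightarrow> (nat \<Rightarrow> 'w \<Rightarrow> real) \<Rightarrow> (nat \<Rightarrow> 'w \<Rightarrow> real) \<Rightarrow>
    nat \<Rightarrow> 'w \<Rightarrow> real" where
  "rru_D \<mu> \<nu> x y U V W n \<omega> = fst (rru \<mu> \<nu> x y U V W n \<omega>) + snd (rru \<mu> \<nu> x y U V W n \<omega>)"

text \<open>The filtration A_n = sigma(I(1),R_X(1),R_Y(1),...,I(n),R_X(n),R_Y(n)),
  with R_X(i) = q_mu(V_i), R_Y(i) = q_nu(W_i).\<close>
definition rru_filt :: "'w measure \<Rightarrow> real measure \<Rightarrow> real measure \<Rightarrow> real \<Rightarrow> real \<Rightarrow>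
    (nat \<Rightarrow> 'w \<Rightarrow> real) \<Rightarrow> (nat \<Rightarrow> 'w \<Rightarrow> real) \<Rightarrow> (nat \<Rightarrow> 'w \<Rightarrow> real) \<Rightarrow>
    nat \<Rightarrow> 'w measure" where
  "rru_filt M \<mu> \<nu> x y U V W n =
     sigma (space M)
       (\<Union>i\<in>{1..n}. {(\<lambda>\<omega>. (rru_ind \<mu> \<nu> x y U V W i \<omega>,
                            quantile_fn \<mu> (V i \<omega>), quantile_fn \<nu> (W i \<omega>))) -` A \<inter> space M
                     | A. A \<in> sets (count_space UNIV \<Otimes>\<^sub>M borel \<Otimes>\<^sub>M borel)})"

definition prob_on_interval :: "real \<Rightarrow> real measure \<Rightarrow> bool" where
  "prob_on_interval \<beta> \<mu> \<longleftrightarrow> prob_space \<mu> \<and> sets \<mu> = sets borel \<and> emeasure \<mu> {0..\<beta>} = 1"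

end

theory Submission
  imports Defs
begin


lemma quantile_basic:
  fixes \<beta> :: real and \<mu> :: "real measure"
  assumes mu: "prob_on_interval \<beta> \<mu>"
  shows quantile_range: "\<And>v. v \<in> {0<..<1} \<Longrightarrow> 0 \<le> quantile_fn \<mu> v \<and> quantile_fn \<mu> v \<le> \<beta>"
    and quantile_meas: "quantile_fn \<mu> \<in> borel_measurable borel"
    and quantile_int: "(\<integral>v. quantile_fn \<mu> v \<partial>uniform_measure lborel {0..1}) = (\<integral>t. t \<partial>\<mu>)"
proof -
  interpret P: prob_space \<mu> using mu by (simp add: prob_on_interval_def)
  interpret cdf_distribution \<mu>
    by unfold_locales (use mu in \<open>simp add: prob_on_interval_def\<close>)
  have qI: "quantile_fn \<mu> = I" by (simp add: quantile_fn_def cdf_def fun_eq_iff)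
  have sets_mu: "sets \<mu> = sets borel" using mu by (simp add: prob_on_interval_def)
  have m01: "measure \<mu> {0..\<beta>} = 1" using mu by (simp add: prob_on_interval_def measure_def)
  have Cb: "C \<beta> = 1"
  proof -
    have "measure \<mu> {0..\<beta>} \<le> measure \<mu> {..\<beta>}"
      by (rule P.finite_measure_mono) (auto simp: sets_mu)
    then show ?thesis using m01 P.prob_le_1[of "{..\<beta>}"] by (simp add: cdf_def)
  qed
  have Cneg: "C x = 0" if "x < 0" for x
  proof -
    have "measure \<mu> {..x} \<le> measure \<mu> (UNIV - {0..\<beta>})"
      by (rule P.finite_measure_mono) (use that in \<open>auto simp: sets_mu\<close>)
    also have "\<dots> = 0"
    proof -
      have sp: "space \<mu> = UNIV" using sets_eq_imp_space_eq[OF sets_mu] by simp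
      show ?thesis using P.prob_compl[of "{0..\<beta>}"] m01 sp by (simp add: sets_mu)
    qed
    finally show ?thesis using measure_nonneg[of \<mu> "{..x}"] by (simp add: cdf_def)
  qed
  show "0 \<le> quantile_fn \<mu> v \<and> quantile_fn \<mu> v \<le> \<beta>" if v: "v \<in> {0<..<1}" for v
  proof
    have "v \<le> C \<beta>" using Cb v by simp
    then show "quantile_fn \<mu> v \<le> \<beta>" using pseudoinverse[of v \<beta>] v qI by simp
    show "0 \<le> quantile_fn \<mu> v"
    proof (rule ccontr)
      assume "\<not> 0 \<le> quantile_fn \<mu> v"
      then have "I v < 0" using qI by simp
      then have "v \<le> C (I v)" using pseudoinverse[of v "I v"] v by simp
      then show False using Cneg[OF \<open>I v < 0\<close>] v by simp
    qed
  qed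
  show "quantile_fn \<mu> \<in> borel_measurable borel"
  proof -
    have e: "quantile_fn \<mu> = (\<lambda>v. (if v \<in> {0<..<1} then I v else 0) + (if v \<le> 0 then Inf UNIV else 0)
       + (if v = 1 then I 1 else 0) + (if 1 < v then Inf {} else 0))"
    proof
      fix v
      have u: "{t. v \<le> C t} = UNIV" if "v \<le> 0" using that cdf_nonneg by (auto intro: order.trans)
      have e: "{t. v \<le> C t} = {}" if "1 < v" using that cdf_bounded_prob by (auto intro: order.trans simp: not_le) (meson le_less_trans not_le)
      show "quantile_fn \<mu> v = (if v \<in> {0<..<1} then I v else 0) + (if v \<le> 0 then Inf UNIV else 0)
       + (if v = 1 then I 1 else 0) + (if 1 < v then Inf {} else 0)"
        using u e unfolding qI by auto
    qed
    have m1: "(\<lambda>v. if v \<in> {0<..<1} then I v else 0) \<in> borel_measurable borel"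
      using measurable_CI measurable_restrict_space_iff[of "{0<..<1::real}" borel 0 borel I] by simp
    show ?thesis unfolding e by (intro borel_measurable_add m1) measurable
  qed
  then have qm: "I \<in> borel_measurable borel" using qI by simp
  have "(\<integral>v. quantile_fn \<mu> v \<partial>uniform_measure lborel {0..1}) = (\<integral>v. I v \<partial>density lborel (\<lambda>x. ennreal (indicator {0..1::real} x)))"
    unfolding uniform_measure_def qI by (simp add: ennreal_indicator divide_ennreal_def)
  also have "\<dots> = (\<integral>v. indicator {0..1::real} v * I v \<partial>lborel)"
    by (subst integral_density) (use qm in auto)
  also have "\<dots> = (\<integral>v. indicator {0<..<1::real} v * I v \<partial>lborel)"
  proof (rule integral_cong_AE)
    show "AE v in lborel. indicator {0..1::real} v * I v = indicator {0<..<1::real} v * I v"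
      using AE_lborel_singleton[of 0] AE_lborel_singleton[of 1] by eventually_elim (auto simp: indicator_def)
  qed (use qm in auto)
  also have "\<dots> = (\<integral>v. I v \<partial>restrict_space lborel {0<..<1})"
    by (subst integral_restrict_space) auto
  also have "\<dots> = (\<integral>t. t \<partial>distr (restrict_space lborel {0<..<1::real}) borel I)"
    by (subst integral_distr) (auto intro: measurable_restrict_space1 qm)
  also have "\<dots> = (\<integral>t. t \<partial>\<mu>)" using distr_I_eq_M by simp
  finally show "(\<integral>v. quantile_fn \<mu> v \<partial>uniform_measure lborel {0..1}) = (\<integral>t. t \<partial>\<mu>)" .
qed


definition chordp :: "real \<Rightarrow> real \<Rightarrow> (real \<Rightarrow> real) \<Rightarrow> bool" where
  "chordp y0 \<beta> g \<longleftrightarrow> (\<forall>y\<ge>y0. \<forall>r\<in>{0..\<beta>}. g (y + r) \<le> g y + r / \<beta> * (g (y + \<beta>) - g y))"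

lemma chordp_inv:
  assumes "u + y0 > 0" "\<beta> > 0"
  shows "chordp y0 \<beta> (\<lambda>y. 1 / (u + y))"
  unfolding chordp_def
proof (intro allI impI ballI)
  fix y r assume y: "y0 \<le> y" and r: "r \<in> {0..\<beta>}"
  define z where "z = u + y"
  have z: "z > 0" using assms y by (simp add: z_def)
  have r0: "0 \<le> r" "r \<le> \<beta>" using r by auto
  have eq: "1 / z + r / \<beta> * (1 / (z + \<beta>) - 1 / z) - 1 / (z + r) = r * (\<beta> - r) / (z * (z + \<beta>) * (z + r))"
  proof -
    have nz: "z \<noteq> 0" "z + \<beta> \<noteq> 0" "z + r \<noteq> 0" "\<beta> \<noteq> 0" using z r0 assms(2) by auto
    show ?thesis using nz by (simp add: divide_simps) (simp add: algebra_simps)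
  qed
  have "r * (\<beta> - r) / (z * (z + \<beta>) * (z + r)) \<ge> 0"
    using z r0 assms(2) by (intro divide_nonneg_pos mult_nonneg_nonneg) auto
  then show "1 / (u + (y + r)) \<le> 1 / (u + y) + r / \<beta> * (1 / (u + (y + \<beta>)) - 1 / (u + y))"
    using eq by (simp add: z_def add.assoc)
qed

lemma chordp_add:
  assumes a1: "chordp y0 \<beta> f" and a2: "chordp y0 \<beta> g"
  shows "chordp y0 \<beta> (\<lambda>y. f y + g y)"
  unfolding chordp_def
proof (intro allI impI ballI)
  fix y r assume y: "y0 \<le> y" "r \<in> {0..\<beta>}"
  note a = a1 a2
  have "f (y + r) \<le> f y + r / \<beta> * (f (y + \<beta>) - f y)" "g (y + r) \<le> g y + r / \<beta> * (g (y + \<beta>) - g y)"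
    using a y unfolding chordp_def by blast+
  moreover have "r / \<beta> * ((f (y + \<beta>) + g (y + \<beta>)) - (f y + g y)) = r / \<beta> * (f (y + \<beta>) - f y) + r / \<beta> * (g (y + \<beta>) - g y)"
    by (simp add: algebra_simps)
  ultimately show "f (y + r) + g (y + r) \<le> f y + g y + r / \<beta> * (f (y + \<beta>) + g (y + \<beta>) - (f y + g y))"
    by linarith
qed

lemma chordp_scale:
  assumes "chordp y0 \<beta> f" "c \<ge> 0"
  shows "chordp y0 \<beta> (\<lambda>y. c * f y)"
  unfolding chordp_def
proof (intro allI impI ballI)
  fix y r assume "y0 \<le> y" "r \<in> {0..\<beta>}"
  then have "f (y + r) \<le> f y + r / \<beta> * (f (y + \<beta>) - f y)" using assms(1) unfolding chordp_def by blast
  then have "c * f (y + r) \<le> c * (f y + r / \<beta> * (f (y + \<beta>) - f y))" using assms(2) by (rule mult_left_mono)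
  then show "c * f (y + r) \<le> c * f y + r / \<beta> * (c * f (y + \<beta>) - c * f y)" by (simp add: algebra_simps)
qed

definition hpot :: "real \<Rightarrow> real \<Rightarrow> real \<Rightarrow> real" where
  "hpot a J t = (t + a) / (t * (t + a + J))"

lemma hpot_decomp:
  assumes "t > 0" "a \<ge> 0" "J \<ge> 0" "a + J > 0"
  shows "hpot a J t = (a / (a + J)) * (1 / t) + (J / (a + J)) * (1 / (a + J + t))"
proof -
  have nz: "t \<noteq> 0" "a + J \<noteq> 0" "t + a + J \<noteq> 0" "a + J + t \<noteq> 0" using assms by auto
  show ?thesis using nz unfolding hpot_def by (simp add: divide_simps) (simp add: algebra_simps)
qed

lemma hpot_chord:
  assumes "y0 > 0" "a \<ge> 0" "J \<ge> 0" "\<beta> > 0"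
  shows "chordp y0 \<beta> (hpot a J)"
proof (cases "a + J = 0")
  case True
  then have "a = 0" "J = 0" using assms by auto
  then have "chordp y0 \<beta> (hpot a J) = chordp y0 \<beta> (\<lambda>y. 1 / (0 + y))"
    unfolding chordp_def hpot_def using assms(1)
    by (intro iff_allI imp_cong refl ball_cong) (auto simp: add_pos_nonneg order.trans[OF less_imp_le])
  then show ?thesis using chordp_inv[of 0 y0 \<beta>] assms by simp
next
  case False
  then have pos: "a + J > 0" using assms by simp
  have c: "chordp y0 \<beta> (\<lambda>y. (a / (a + J)) * (1 / (0 + y)) + (J / (a + J)) * (1 / ((a + J) + y)))"
    by (intro chordp_add chordp_scale chordp_inv) (use assms pos in auto)
  show ?thesis unfolding chordp_def
  proof (intro allI impI ballI)
    fix y r assume y: "y0 \<le> y" and r: "r \<in> {0..\<beta>}"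
    have y': "y > 0" "y + r > 0" "y + \<beta> > 0" using y r assms by auto
    show "hpot a J (y + r) \<le> hpot a J y + r / \<beta> * (hpot a J (y + \<beta>) - hpot a J y)"
      using c[unfolded chordp_def, rule_format, OF y r] hpot_decomp[OF y'(1) assms(2,3) pos]
        hpot_decomp[OF y'(2) assms(2,3) pos] hpot_decomp[OF y'(3) assms(2,3) pos]
      by simp
  qed
qed

lemma hpot_rec:
  assumes t: "t > 0" and a: "a \<ge> 0" and J: "J \<ge> 0" and m: "m > 0"
  shows "hpot a J t + m / (a + m) * (hpot a J (t + (a + m)) - hpot a J t) \<le> hpot a (J + m) t"
proof -
  define b where "b = a + m"
  define N0 where "N0 = t + a"
  define D0 where "D0 = t * (t + a + J)"
  define N1 where "N1 = t + b + a"
  define D1 where "D1 = (t + b) * (t + b + a + J)"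
  define D2 where "D2 = t * (t + a + J + m)"
  define P where "P = 2*t*a + 2*t*m + 2*a*a + a*J + 3*a*m + J*m + m*m"
  have pos: "b > 0" "D0 > 0" "D1 > 0" "D2 > 0" using t a J m by (auto simp: b_def D0_def D1_def D2_def)
  have h0: "hpot a J t = N0 / D0" by (simp add: hpot_def N0_def D0_def)
  have h1: "hpot a J (t + b) = N1 / D1" by (simp add: hpot_def N1_def D1_def algebra_simps)
  have h2: "hpot a (J + m) t = N0 / D2" by (simp add: hpot_def N0_def D2_def algebra_simps)
  have lhs: "hpot a J t + m / b * (hpot a J (t + b) - hpot a J t) = (a * N0 * D1 * D2 + m * N1 * D0 * D2) / (b * D0 * D1 * D2)"
    unfolding h0 h1 using pos by (simp add: field_simps) (simp add: b_def algebra_simps)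
  have rhs: "hpot a (J + m) t = (b * N0 * D0 * D1) / (b * D0 * D1 * D2)"
    unfolding h2 using pos by (simp add: field_simps)
  have key: "b * N0 * D0 * D1 - (a * N0 * D1 * D2 + m * N1 * D0 * D2) = t * a * J * m * P"
    unfolding b_def N0_def D0_def N1_def D1_def D2_def P_def by algebra
  have "t * a * J * m * P \<ge> 0" using t a J m unfolding P_def by (intro mult_nonneg_nonneg add_nonneg_nonneg) auto
  then have "a * N0 * D1 * D2 + m * N1 * D0 * D2 \<le> b * N0 * D0 * D1" using key by linarith
  then have "(a * N0 * D1 * D2 + m * N1 * D0 * D2) / (b * D0 * D1 * D2) \<le> (b * N0 * D0 * D1) / (b * D0 * D1 * D2)"
    using pos by (intro divide_right_mono) auto
  then show ?thesis using lhs rhs by (simp add: b_def)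
qed


fun Wb :: "real \<Rightarrow> nat \<Rightarrow> (nat \<Rightarrow> real) \<Rightarrow> real" where
  "Wb p 0 \<phi> = \<phi> 0"
| Wb_Suc: "Wb p (Suc k) \<phi> = (1 - p) * Wb p k \<phi> + p * Wb p k (\<lambda>i. \<phi> (Suc i))"

lemma inv_antimono: "0 < a \<Longrightarrow> a \<le> b \<Longrightarrow> 1 / b \<le> 1 / (a::real)"
  by (simp add: frac_le)

lemma Wb_add: "Wb p k (\<lambda>i. \<phi> i + \<psi> i) = Wb p k \<phi> + Wb p k \<psi>"
  by (induction k arbitrary: \<phi> \<psi>) (simp_all add: algebra_simps)

lemma Wb_scale: "Wb p k (\<lambda>i. c * \<phi> i) = c * Wb p k \<phi>"
  by (induction k arbitrary: \<phi>) (simp_all add: algebra_simps)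

lemma Wb_diff: "Wb p k (\<lambda>i. \<phi> i - \<psi> i) = Wb p k \<phi> - Wb p k \<psi>"
  using Wb_add[of p k \<phi> "\<lambda>i. - \<psi> i"] Wb_scale[of p k "-1" \<psi>] by simp

lemma Wb_const: "Wb p k (\<lambda>i. c) = c"
  by (induction k) (simp_all add: algebra_simps)

lemma Wb_mono:
  assumes "0 \<le> p" "p \<le> 1" "\<And>i. \<phi> i \<le> \<psi> i"
  shows "Wb p k \<phi> \<le> Wb p k \<psi>"
  using assms(3)
proof (induction k arbitrary: \<phi> \<psi>)
  case 0 then show ?case by simp
next
  case (Suc k)
  have "Wb p k \<phi> \<le> Wb p k \<psi>" "Wb p k (\<lambda>i. \<phi> (Suc i)) \<le> Wb p k (\<lambda>i. \<psi> (Suc i))"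
    using Suc by auto
  then show ?case using assms(1,2) by (simp add: add_mono mult_left_mono)
qed

lemma Wb_id: "Wb p k (\<lambda>i. real i) = real k * p"
proof (induction k)
  case 0 then show ?case by simp
next
  case (Suc k)
  have "Wb p k (\<lambda>i. real (Suc i)) = real k * p + 1"
    using Wb_add[of p k real "\<lambda>_. 1"] by (simp add: Wb_const Suc add.commute)
  then show ?case using Suc by (simp add: algebra_simps)
qed

lemma Wb_sizebias: "(real k + 1) * p * Wb p k (\<lambda>i. \<phi> (Suc i)) = Wb p (Suc k) (\<lambda>j. real j * \<phi> j)"
proof (induction k arbitrary: \<phi>)
  case 0 then show ?case by simp
next
  case (Suc k)
  have IH1: "Wb p (Suc k) (\<lambda>j. real j * \<phi> j) = (real k + 1) * p * Wb p k (\<lambda>i. \<phi> (Suc i))"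
    using Suc[of \<phi>] by simp
  have IH2: "Wb p (Suc k) (\<lambda>j. real j * \<phi> (Suc j)) = (real k + 1) * p * Wb p k (\<lambda>i. \<phi> (Suc (Suc i)))"
    using Suc[of "\<lambda>j. \<phi> (Suc j)"] by simp
  have "Wb p (Suc (Suc k)) (\<lambda>j. real j * \<phi> j)
      = (1 - p) * Wb p (Suc k) (\<lambda>j. real j * \<phi> j) + p * Wb p (Suc k) (\<lambda>j. real (Suc j) * \<phi> (Suc j))"
    by (simp only: Wb_Suc)
  also have "Wb p (Suc k) (\<lambda>j. real (Suc j) * \<phi> (Suc j)) = Wb p (Suc k) (\<lambda>j. real j * \<phi> (Suc j)) + Wb p (Suc k) (\<lambda>j. \<phi> (Suc j))"
  proof -
    have "(\<lambda>j. real (Suc j) * \<phi> (Suc j)) = (\<lambda>j. real j * \<phi> (Suc j) + \<phi> (Suc j))"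
      by (auto simp: algebra_simps)
    then show ?thesis by (simp only: Wb_add)
  qed
  finally have "Wb p (Suc (Suc k)) (\<lambda>j. real j * \<phi> j)
      = (1 - p) * ((real k + 1) * p * Wb p k (\<lambda>i. \<phi> (Suc i)))
        + p * ((real k + 1) * p * Wb p k (\<lambda>i. \<phi> (Suc (Suc i))) + Wb p (Suc k) (\<lambda>j. \<phi> (Suc j)))"
    using IH1 IH2 by simp
  also have "\<dots> = (real k + 1) * p * ((1 - p) * Wb p k (\<lambda>i. \<phi> (Suc i)) + p * Wb p k (\<lambda>i. \<phi> (Suc (Suc i)))) + p * Wb p (Suc k) (\<lambda>j. \<phi> (Suc j))"
    by (simp add: algebra_simps)
  also have "\<dots> = (real k + 1) * p * Wb p (Suc k) (\<lambda>j. \<phi> (Suc j)) + p * Wb p (Suc k) (\<lambda>j. \<phi> (Suc j))"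
    by (simp only: Wb_Suc)
  finally show ?case by (simp add: algebra_simps)
qed

lemma concave_tangent:
  fixes E b x \<mu> :: real
  assumes "E > 0" "b > 0" "x \<ge> 0" "\<mu> \<ge> 0"
  shows "x / (E + b * x) \<le> \<mu> / (E + b * \<mu>) + E / (E + b * \<mu>)^2 * (x - \<mu>)"
proof -
  define A where "A = E + b * x"
  define B where "B = E + b * \<mu>"
  have pos: "A > 0" "B > 0" using assms by (auto simp: A_def B_def add_pos_nonneg)
  have "\<mu> / B + E / B^2 * (x - \<mu>) - x / A = E * b * (x - \<mu>)^2 / (A * B^2)"
    using pos unfolding A_def B_def by (simp add: divide_simps power2_eq_square) (simp add: algebra_simps)
  moreover have "E * b * (x - \<mu>)^2 / (A * B^2) \<ge> 0" using pos assms by simp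
  ultimately show ?thesis unfolding A_def B_def by linarith
qed

definition Vf :: "real \<Rightarrow> real \<Rightarrow> real \<Rightarrow> nat \<Rightarrow> real \<Rightarrow> real" where
  "Vf p \<beta> c k y = Wb p k (\<lambda>i. 1 / (c + y + \<beta> * real i))"

lemma Vf_0: "Vf p \<beta> c 0 y = 1 / (c + y)"
  by (simp add: Vf_def)

lemma Vf_rec: "Vf p \<beta> c (Suc k) y = (1 - p) * Vf p \<beta> c k y + p * Vf p \<beta> c k (y + \<beta>)"
  by (simp add: Vf_def algebra_simps)

lemma Vf_bounds:
  assumes "0 \<le> p" "p \<le> 1" "c + y > 0" "\<beta> \<ge> 0"
  shows "0 \<le> Vf p \<beta> c k y" "Vf p \<beta> c k y \<le> 1 / (c + y)"
proof -
  have "Wb p k (\<lambda>i. 0) \<le> Vf p \<beta> c k y" unfolding Vf_def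
    using assms by (intro Wb_mono) (auto intro!: divide_nonneg_nonneg add_nonneg_nonneg)
  then show "0 \<le> Vf p \<beta> c k y" by (simp add: Wb_const)
  have "Vf p \<beta> c k y \<le> Wb p k (\<lambda>i. 1 / (c + y))" unfolding Vf_def
    using assms by (intro Wb_mono inv_antimono) auto
  then show "Vf p \<beta> c k y \<le> 1 / (c + y)" by (simp add: Wb_const)
qed

lemma Vf_chord:
  assumes "0 \<le> p" "p \<le> 1" "c + y0 > 0" "\<beta> > 0"
  shows "chordp y0 \<beta> (Vf p \<beta> c k)"
  unfolding chordp_def
proof (intro allI impI ballI)
  fix y r assume y: "y0 \<le> y" and r: "r \<in> {0..\<beta>}"
  have "\<And>i. 1 / (c + \<beta> * real i + (y + r)) \<le> 1 / (c + \<beta> * real i + y) + r / \<beta> * (1 / (c + \<beta> * real i + (y + \<beta>)) - 1 / (c + \<beta> * real i + y))"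
  proof -
    fix i
    have "\<beta> * real i \<ge> 0" using assms by simp
    then have "c + \<beta> * real i + y0 > 0" using assms by linarith
    then show "1 / (c + \<beta> * real i + (y + r)) \<le> 1 / (c + \<beta> * real i + y) + r / \<beta> * (1 / (c + \<beta> * real i + (y + \<beta>)) - 1 / (c + \<beta> * real i + y))"
      using chordp_inv[of "c + \<beta> * real i" y0 \<beta>] assms y r unfolding chordp_def by blast
  qed
  then have "Vf p \<beta> c k (y + r) \<le> Wb p k (\<lambda>i. 1 / (c + \<beta> * real i + y) + r / \<beta> * (1 / (c + \<beta> * real i + (y + \<beta>)) - 1 / (c + \<beta> * real i + y)))"
    unfolding Vf_def using assms by (intro Wb_mono) (auto simp: algebra_simps)
  also have "\<dots> = Vf p \<beta> c k y + r / \<beta> * (Vf p \<beta> c k (y + \<beta>) - Vf p \<beta> c k y)"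
    unfolding Vf_def Wb_add Wb_scale Wb_diff by (simp add: algebra_simps)
  finally show "Vf p \<beta> c k (y + r) \<le> Vf p \<beta> c k y + r / \<beta> * (Vf p \<beta> c k (y + \<beta>) - Vf p \<beta> c k y)" .
qed

lemma Vf_final:
  assumes p: "0 < p" "p \<le> 1" and b: "\<beta> > 0" and cy: "c + y > \<beta>"
  shows "Vf p \<beta> c k y \<le> 1 / (c + y - \<beta> + \<beta> * p * (real k + 1))"
proof -
  define E where "E = c + y - \<beta>"
  have E: "E > 0" using cy by (simp add: E_def)
  define \<mu> where "\<mu> = (real k + 1) * p"
  have mu: "\<mu> \<ge> 0" "\<mu> > 0" using p by (auto simp: \<mu>_def)
  have "(real k + 1) * p * Vf p \<beta> c k y = Wb p (Suc k) (\<lambda>j. real j * (1 / (E + \<beta> * real j)))"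
  proof -
    have "Vf p \<beta> c k y = Wb p k (\<lambda>i. (\<lambda>j. 1 / (E + \<beta> * real j)) (Suc i))"
      unfolding Vf_def E_def by (simp add: algebra_simps)
    then show ?thesis using Wb_sizebias[of k p "\<lambda>j. 1 / (E + \<beta> * real j)"] by simp
  qed
  also have "\<dots> \<le> Wb p (Suc k) (\<lambda>j. \<mu> / (E + \<beta> * \<mu>) + E / (E + \<beta> * \<mu>)^2 * (real j - \<mu>))"
  proof (rule Wb_mono)
    fix j
    show "real j * (1 / (E + \<beta> * real j)) \<le> \<mu> / (E + \<beta> * \<mu>) + E / (E + \<beta> * \<mu>)^2 * (real j - \<mu>)"
      using concave_tangent[OF E b _ mu(1), of "real j"] by simp
  qed (use p in auto)
  also have "\<dots> = \<mu> / (E + \<beta> * \<mu>)"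
  proof -
    have "Wb p (Suc k) (\<lambda>j. \<mu> / (E + \<beta> * \<mu>) + E / (E + \<beta> * \<mu>)^2 * (real j - \<mu>))
        = \<mu> / (E + \<beta> * \<mu>) + E / (E + \<beta> * \<mu>)^2 * (Wb p (Suc k) (\<lambda>j. real j) - \<mu>)"
      by (simp only: Wb_add Wb_scale Wb_diff Wb_const)
    also have "Wb p (Suc k) (\<lambda>j. real j) = \<mu>" by (simp only: Wb_id \<mu>_def) simp
    finally show ?thesis by simp
  qed
  finally have "\<mu> * Vf p \<beta> c k y \<le> \<mu> * (1 / (E + \<beta> * \<mu>))" by (simp add: \<mu>_def)
  then have "Vf p \<beta> c k y \<le> 1 / (E + \<beta> * \<mu>)" using mu(2) by (rule mult_left_le_imp_le)
  then show ?thesis by (simp add: E_def \<mu>_def algebra_simps)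
qed

lemma tangent_inv:
  fixes w z :: real
  assumes w: "w > 0" and z: "z > 0"
  shows "1 / w - (z - w) / w^2 \<le> 1 / z"
proof -
  have e: "1 / w - (z - w) / w^2 = (2 * w - z) / w^2"
    using w by (simp add: field_simps power2_eq_square)
  have sq: "w^2 - (2 * w - z) * z = (z - w)^2" by (simp add: power2_eq_square algebra_simps)
  have "(2 * w - z) * z \<le> w^2" using sq by (smt (verit) zero_le_power2)
  then have "(2 * w - z) * z / (w^2 * z) \<le> w^2 / (w^2 * z)"
    using w z by (intro divide_right_mono) auto
  then show ?thesis unfolding e using w z by (simp add: power2_eq_square)
qed

lemma final_compare:
  fixes \<beta> m c d D :: real and k :: nat
  assumes m: "0 < m" "m \<le> \<beta>" and cd: "0 \<le> c" "c \<le> d" and D: "D \<ge> 2 * \<beta>"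
  shows "1 / (c + D - \<beta> + m * (real k + 1)) - 1 / (d + D + m * real k)
     \<le> (\<beta> - m + d) / m * (1 / (c + D - \<beta> + m * real k) - 1 / (c + D - \<beta> + m * real (k + 1)))"
proof -
  define bk where "bk = c + D - \<beta> + m * real k"
  define bk1 where "bk1 = c + D - \<beta> + m * real (k + 1)"
  define w where "w = d + D + m * real k"
  have mk: "m * real k \<ge> 0" using m by simp
  have b0: "\<beta> > 0" using m by linarith
  have mk1: "m * real (k + 1) \<ge> 0" using m by simp
  have pos: "bk > 0" "bk1 > 0" "w > 0" "bk \<le> w" unfolding bk_def bk1_def w_def using assms mk mk1 b0 by linarith+
  have e1: "1 / (c + D - \<beta> + m * (real k + 1)) - 1 / (d + D + m * real k) = (d - c + \<beta> - m) / (bk1 * w)"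
    using pos unfolding bk1_def w_def by (simp add: divide_simps) (simp add: algebra_simps)
  have e2: "(\<beta> - m + d) / m * (1 / bk - 1 / bk1) = (\<beta> - m + d) / (bk * bk1)"
    using pos m unfolding bk_def bk1_def by (simp add: divide_simps) (simp add: algebra_simps)
  have "(d - c + \<beta> - m) / (bk1 * w) \<le> (\<beta> - m + d) / (bk1 * w)"
    using pos cd by (intro divide_right_mono) auto
  also have "\<dots> \<le> (\<beta> - m + d) / (bk * bk1)"
  proof -
    have "bk1 * bk \<le> bk1 * w" using pos by (intro mult_left_mono) auto
    then show ?thesis using pos m cd by (intro divide_left_mono) (auto simp: mult.commute)
  qed
  finally show ?thesis using e1 e2 by (simp add: bk_def bk1_def)
qed


lemma measurable_from_smaller:
  "f \<in> measurable A N \<Longrightarrow> space A = space B \<Longrightarrow> sets A \<subseteq> sets B \<Longrightarrow> f \<in> measurable B N"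
  by (auto simp: measurable_def)

locale rru_setting =
  fixes M :: "'w measure" and \<mu> \<nu> :: "real measure"
    and m0 \<beta> m x y :: real
    and U V W :: "nat \<Rightarrow> 'w \<Rightarrow> real"
  assumes m0_pos: "0 < m0" and m0_le: "m0 \<le> \<beta>"
    and mu: "prob_on_interval \<beta> \<mu>" and nu: "prob_on_interval \<beta> \<nu>"
    and mean_mu: "(\<integral>t. t \<partial>\<mu>) = m" and mean_nu: "(\<integral>t. t \<partial>\<nu>) = m"
    and m_ge: "m0 \<le> m"
    and init: "x \<ge> 0" "y \<ge> 0" "(x, y) \<noteq> (0, 0)"
    and M: "prob_space M"
    and U_indep: "prob_space.indep_vars M (\<lambda>_. borel) U UNIV"
    and U_unif: "\<And>n. distr M borel (U n) = uniform_measure lborel {0..1}"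
    and VW_indep: "prob_space.indep_vars M (\<lambda>_. borel \<Otimes>\<^sub>M borel) (\<lambda>n \<omega>. (V n \<omega>, W n \<omega>)) UNIV"
    and VW_ident: "\<And>n. distr M (borel \<Otimes>\<^sub>M borel) (\<lambda>\<omega>. (V n \<omega>, W n \<omega>))
                      = distr M (borel \<Otimes>\<^sub>M borel) (\<lambda>\<omega>. (V 0 \<omega>, W 0 \<omega>))"
    and V_unif: "\<And>n. distr M borel (V n) = uniform_measure lborel {0..1}"
    and W_unif: "\<And>n. distr M borel (W n) = uniform_measure lborel {0..1}"
    and U_VW_indep: "prob_space.indep_set M
        (sets (vimage_algebra (space M) (\<lambda>\<omega> n. U n \<omega>) (Pi\<^sub>M UNIV (\<lambda>_. borel))))
        (sets (vimage_algebra (space M) (\<lambda>\<omega> n. (V n \<omega>, W n \<omega>))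
                 (Pi\<^sub>M UNIV (\<lambda>_. borel \<Otimes>\<^sub>M borel))))"
begin

sublocale P: prob_space M by (rule M)

abbreviation "qmu \<equiv> quantile_fn \<mu>"
abbreviation "qnu \<equiv> quantile_fn \<nu>"
abbreviation "Xr i \<omega> \<equiv> fst (rru \<mu> \<nu> x y U V W i \<omega>)"
abbreviation "Yr i \<omega> \<equiv> snd (rru \<mu> \<nu> x y U V W i \<omega>)"
abbreviation "Dr i \<omega> \<equiv> rru_D \<mu> \<nu> x y U V W i \<omega>"
abbreviation "Ir i \<omega> \<equiv> U (Suc i) \<omega> \<le> Xr i \<omega> / (Xr i \<omega> + Yr i \<omega>)"
abbreviation "Rr i \<omega> \<equiv> (if Ir i \<omega> then qmu (V (Suc i) \<omega>) else qnu (W (Suc i) \<omega>))"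
abbreviation "D0 \<equiv> x + y"

lemma D0_pos: "D0 > 0" using init by auto

lemma X_Suc: "Xr (Suc i) \<omega> = Xr i \<omega> + (if Ir i \<omega> then qmu (V (Suc i) \<omega>) else 0)"
  and Y_Suc: "Yr (Suc i) \<omega> = Yr i \<omega> + (if Ir i \<omega> then 0 else qnu (W (Suc i) \<omega>))"
  by (simp_all add: Let_def split: prod.split)

lemma D_def': "Dr i \<omega> = Xr i \<omega> + Yr i \<omega>" by (simp add: rru_D_def)

lemma D_Suc: "Dr (Suc i) \<omega> = Dr i \<omega> + Rr i \<omega>"
  unfolding D_def' X_Suc Y_Suc by auto

lemma D_0: "Dr 0 \<omega> = D0" by (simp add: rru_D_def)

lemma qmu_meas[measurable]: "qmu \<in> borel_measurable borel" using quantile_meas[OF mu] .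
lemma qnu_meas[measurable]: "qnu \<in> borel_measurable borel" using quantile_meas[OF nu] .

lemma U_meas[measurable]: "U n \<in> borel_measurable M"
  using U_indep unfolding P.indep_vars_def by auto
lemma VW_meas: "(\<lambda>\<omega>. (V n \<omega>, W n \<omega>)) \<in> measurable M (borel \<Otimes>\<^sub>M borel)"
  using VW_indep unfolding P.indep_vars_def by auto
lemma V_meas[measurable]: "V n \<in> borel_measurable M"
  using measurable_compose[OF VW_meas[of n] measurable_fst] by simp
lemma W_meas[measurable]: "W n \<in> borel_measurable M"
  using measurable_compose[OF VW_meas[of n] measurable_snd] by simp

lemma unif_AE: "AE v in uniform_measure lborel {0..1::real}. v \<in> {0<..<1}"
proof (rule AE_uniform_measureI)
  show "AE v in lborel. v \<in> {0..1::real} \<longrightarrow> v \<in> {0<..<1}"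
    using AE_lborel_singleton[of 0] AE_lborel_singleton[of 1] by eventually_elim auto
qed simp

lemma AE_VW: "AE \<omega> in M. \<forall>n. V n \<omega> \<in> {0<..<1} \<and> W n \<omega> \<in> {0<..<1}"
proof -
  have "AE \<omega> in M. V n \<omega> \<in> {0<..<1}" for n
  proof -
    have "AE v in distr M borel (V n). v \<in> {0<..<1}" unfolding V_unif by (rule unif_AE)
    from AE_distrD[OF V_meas this] show ?thesis .
  qed
  moreover have "AE \<omega> in M. W n \<omega> \<in> {0<..<1}" for n
  proof -
    have "AE v in distr M borel (W n). v \<in> {0<..<1}" unfolding W_unif by (rule unif_AE)
    from AE_distrD[OF W_meas this] show ?thesis .
  qed
  ultimately show ?thesis by (simp add: AE_all_countable)
qed

lemma AE_R: "AE \<omega> in M. \<forall>i. 0 \<le> Rr i \<omega> \<and> Rr i \<omega> \<le> \<beta>"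
  using AE_VW by eventually_elim (use quantile_range[OF mu] quantile_range[OF nu] in auto)

lemma AE_D: "AE \<omega> in M. \<forall>i. D0 \<le> Dr i \<omega>"
  using AE_R
proof eventually_elim
  case (elim \<omega>)
  show ?case
  proof
    fix i show "D0 \<le> Dr i \<omega>"
    proof (induction i)
      case 0 show ?case by (simp add: D_0)
    next
      case (Suc i)
      have "0 \<le> Rr i \<omega>" using elim by blast
      then show ?case unfolding D_Suc using Suc.IH by linarith
    qed
  qed
qed

lemma beta_pos: "\<beta> > 0" using m0_pos m0_le by simp
lemma m_pos: "m > 0" using m0_pos m_ge by simp

end


context rru_setting begin

abbreviation "FU \<equiv> vimage_algebra (space M) (\<lambda>\<omega> n. U n \<omega>) (Pi\<^sub>M UNIV (\<lambda>_. borel))"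
abbreviation "FV j \<equiv> vimage_algebra (space M) (\<lambda>\<omega>. (V j \<omega>, W j \<omega>)) (borel \<Otimes>\<^sub>M borel)"
abbreviation "FVall \<equiv> vimage_algebra (space M) (\<lambda>\<omega> n. (V n \<omega>, W n \<omega>)) (Pi\<^sub>M UNIV (\<lambda>_. borel \<Otimes>\<^sub>M borel))"
abbreviation "Gen i \<equiv> sets FU \<union> (\<Union>j\<le>i. sets (FV j))"
abbreviation "Gs i \<equiv> sigma (space M) (Gen i)"

lemma FU_ev: "sets FU \<subseteq> sets M"
  using P.indep_setD_ev1[OF U_VW_indep] .
lemma FVall_ev: "sets FVall \<subseteq> sets M"
  using P.indep_setD_ev2[OF U_VW_indep] .

lemma FV_sets: "sets (FV j) = {(\<lambda>\<omega>. (V j \<omega>, W j \<omega>)) -` A \<inter> space M | A. A \<in> sets (borel \<Otimes>\<^sub>M borel)}"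
  by (rule sets_vimage_algebra2) (auto simp: space_pair_measure)

lemma FV_sub: "sets (FV j) \<subseteq> sets FVall"
proof
  fix S assume "S \<in> sets (FV j)"
  then obtain A where A: "A \<in> sets (borel \<Otimes>\<^sub>M borel)" and S: "S = (\<lambda>\<omega>. (V j \<omega>, W j \<omega>)) -` A \<inter> space M"
    unfolding FV_sets by auto
  have c: "(\<lambda>f. f j) \<in> measurable (Pi\<^sub>M UNIV (\<lambda>_. borel \<Otimes>\<^sub>M borel)) (borel \<Otimes>\<^sub>M borel)"
    by (rule measurable_component_singleton) simp
  have B: "(\<lambda>f. f j) -` A \<inter> space (Pi\<^sub>M UNIV (\<lambda>_. borel \<Otimes>\<^sub>M borel)) \<in> sets (Pi\<^sub>M UNIV (\<lambda>_. borel \<Otimes>\<^sub>M borel))"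
    using measurable_sets[OF c A] .
  have "S = (\<lambda>\<omega> n. (V n \<omega>, W n \<omega>)) -` ((\<lambda>f. f j) -` A \<inter> space (Pi\<^sub>M UNIV (\<lambda>_. borel \<Otimes>\<^sub>M borel))) \<inter> space M"
    unfolding S by (auto simp: space_PiM space_pair_measure)
  then show "S \<in> sets FVall" using in_vimage_algebra[OF B] by simp
qed

lemma FV_ev: "sets (FV j) \<subseteq> sets M" using FV_sub FVall_ev by blast

lemma Gen_Pow: "Gen i \<subseteq> Pow (space M)"
  using FU_ev FV_ev sets.sets_into_space by blast

lemma sets_Gs: "sets (Gs i) = sigma_sets (space M) (Gen i)"
  using Gen_Pow by simp
lemma space_Gs: "space (Gs i) = space M"
  using Gen_Pow by simp

lemma Gs_M: "sets (Gs i) \<subseteq> sets M"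
  unfolding sets_Gs using FU_ev FV_ev by (intro sets.sigma_sets_subset) blast

lemma Gs_mono: "i \<le> j \<Longrightarrow> sets (Gs i) \<subseteq> sets (Gs j)"
  unfolding sets_Gs by (intro sigma_sets_mono') auto

lemma meas_Gs_mono: "f \<in> measurable (Gs i) N \<Longrightarrow> i \<le> j \<Longrightarrow> f \<in> measurable (Gs j) N"
  by (rule measurable_from_smaller[where A="Gs i"]) (auto simp: space_Gs Gs_mono)

lemma meas_Gs_M: "f \<in> measurable (Gs i) N \<Longrightarrow> f \<in> measurable M N"
  by (rule measurable_from_smaller[where A="Gs i"]) (auto simp: space_Gs Gs_M)

lemma U_Gs: "U n \<in> borel_measurable (Gs i)"
proof -
  have "(\<lambda>\<omega> n. U n \<omega>) \<in> measurable FU (Pi\<^sub>M UNIV (\<lambda>_. borel))"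
    by (rule measurable_vimage_algebra1) (auto simp: space_PiM)
  then have "U n \<in> measurable FU borel"
    using measurable_compose[OF _ measurable_component_singleton[of n UNIV "\<lambda>_. borel"]] by simp
  then show ?thesis
    by (rule measurable_from_smaller) (auto simp: space_Gs sets_Gs)
qed

lemma VW_Gs: "j \<le> i \<Longrightarrow> (\<lambda>\<omega>. (V j \<omega>, W j \<omega>)) \<in> measurable (Gs i) (borel \<Otimes>\<^sub>M borel)"
proof -
  assume ji: "j \<le> i"
  have "(\<lambda>\<omega>. (V j \<omega>, W j \<omega>)) \<in> measurable (FV j) (borel \<Otimes>\<^sub>M borel)"
    by (rule measurable_vimage_algebra1) (auto simp: space_pair_measure)
  then show ?thesis
    by (rule measurable_from_smaller) (use ji in \<open>auto simp: space_Gs sets_Gs\<close>)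
qed

lemma V_Gs: "j \<le> i \<Longrightarrow> V j \<in> borel_measurable (Gs i)"
  using measurable_compose[OF VW_Gs measurable_fst] by simp
lemma W_Gs: "j \<le> i \<Longrightarrow> W j \<in> borel_measurable (Gs i)"
  using measurable_compose[OF VW_Gs measurable_snd] by simp

lemma XY_Gs: "j \<le> i \<Longrightarrow> (\<lambda>\<omega>. Xr j \<omega>) \<in> borel_measurable (Gs i) \<and> (\<lambda>\<omega>. Yr j \<omega>) \<in> borel_measurable (Gs i)"
proof (induction j)
  case 0 then show ?case by simp
next
  case (Suc j)
  then have ih: "(\<lambda>\<omega>. Xr j \<omega>) \<in> borel_measurable (Gs i)" "(\<lambda>\<omega>. Yr j \<omega>) \<in> borel_measurable (Gs i)" by auto
  note [measurable] = ih U_Gs V_Gs[OF Suc.prems] W_Gs[OF Suc.prems]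
  show ?case unfolding X_Suc Y_Suc by measurable
qed

lemma X_Gs[measurable]: "(\<lambda>\<omega>. Xr i \<omega>) \<in> borel_measurable (Gs i)" using XY_Gs[of i i] by simp
lemma Y_Gs[measurable]: "(\<lambda>\<omega>. Yr i \<omega>) \<in> borel_measurable (Gs i)" using XY_Gs[of i i] by simp

lemma D_Gs[measurable]: "(\<lambda>\<omega>. Dr i \<omega>) \<in> borel_measurable (Gs i)"
  unfolding D_def' by measurable

lemma I_Gs[measurable]: "Measurable.pred (Gs i) (\<lambda>\<omega>. Ir i \<omega>)"
proof -
  note [measurable] = U_Gs[of "Suc i" i]
  show ?thesis by measurable
qed

end


context rru_setting begin

abbreviation "Fam \<equiv> (\<lambda>ob. case ob of None \<Rightarrow> sets FU | Some j \<Rightarrow> sets (FV j))"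

lemma FV_indep: "P.indep_sets (\<lambda>j. sets (FV j)) UNIV"
proof -
  have "P.indep_sets (\<lambda>j. {(\<lambda>\<omega>. (V j \<omega>, W j \<omega>)) -` A \<inter> space M | A. A \<in> sets (borel \<Otimes>\<^sub>M borel)}) UNIV"
    using VW_indep unfolding P.indep_vars_def2 by simp
  then show ?thesis by (simp add: FV_sets)
qed

lemma Fam_indep: "P.indep_sets Fam UNIV"
proof (rule P.indep_setsI)
  fix ob show "Fam ob \<subseteq> P.events" using FU_ev FV_ev by (cases ob) auto
next
  fix A :: "nat option \<Rightarrow> 'w set" and J assume J: "J \<noteq> {}" "J \<subseteq> UNIV" "finite J" and A: "\<forall>j\<in>J. A j \<in> Fam j"
  define K where "K = {j. Some j \<in> J}"
  have "K = Some -` J" unfolding K_def by auto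
  then have K: "finite K" using finite_vimageI[OF J(3), of Some] by simp
  have AK: "\<forall>j\<in>K. A (Some j) \<in> sets (FV j)" using A by (auto simp: K_def)
  have indK: "K \<noteq> {} \<Longrightarrow> P.prob (\<Inter>j\<in>K. A (Some j)) = (\<Prod>j\<in>K. P.prob (A (Some j)))"
    using P.indep_setsD[OF FV_indep, of K "\<lambda>j. A (Some j)"] K AK by auto
  have JK: "J - {None} = Some ` K" unfolding K_def
  proof (intro equalityI subsetI)
    fix z assume "z \<in> J - {None}"
    then obtain j where "z = Some j" "Some j \<in> J" by (cases z) auto
    then show "z \<in> Some ` {j. Some j \<in> J}" by auto
  qed auto
  have prodK: "(\<Prod>j\<in>Some ` K. P.prob (A j)) = (\<Prod>j\<in>K. P.prob (A (Some j)))"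
    by (subst prod.reindex) auto
  show "P.prob (\<Inter>j\<in>J. A j) = (\<Prod>j\<in>J. P.prob (A j))"
  proof (cases "None \<in> J")
    case False
    then have JS: "J = Some ` K" using JK by auto
    then have "K \<noteq> {}" using J by auto
    have "(\<Inter>j\<in>J. A j) = (\<Inter>j\<in>K. A (Some j))" unfolding JS by auto
    then show ?thesis using indK[OF \<open>K \<noteq> {}\<close>] prodK JS by simp
  next
    case True
    then have JS: "J = insert None (Some ` K)" using JK by auto
    have prodJ: "(\<Prod>j\<in>J. P.prob (A j)) = P.prob (A None) * (\<Prod>j\<in>K. P.prob (A (Some j)))"
      unfolding JS using K prodK by (subst prod.insert) auto
    have AN: "A None \<in> sets FU" using A True by auto
    show ?thesis
    proof (cases "K = {}")
      case True
      then show ?thesis using JS by simp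
    next
      case False
      have B: "(\<Inter>j\<in>K. A (Some j)) \<in> sets FVall"
        using AK FV_sub K False by (intro sets.finite_INT) auto
      have "(\<Inter>j\<in>J. A j) = A None \<inter> (\<Inter>j\<in>K. A (Some j))" unfolding JS by auto
      then have "P.prob (\<Inter>j\<in>J. A j) = P.prob (A None) * P.prob (\<Inter>j\<in>K. A (Some j))"
        using P.indep_setD[OF U_VW_indep AN B] by simp
      then show ?thesis using prodJ indK[OF False] by simp
    qed
  qed
qed

lemma G_indep: "P.indep_set (sets (Gs i)) (sets (FV (Suc i)))"
proof -
  define I where "I = (\<lambda>b. if b then insert None (Some ` {..i}) else {Some (Suc i)})"
  have "P.indep_sets (\<lambda>b. sigma_sets (space M) (\<Union>ob\<in>I b. Fam ob)) UNIV"
  proof (rule P.indep_sets_collect_sigma)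
    show "P.indep_sets Fam (\<Union>b. I b)" by (rule P.indep_sets_mono_index[OF _ Fam_indep]) auto
    fix ob b show "Int_stable (Fam ob)"
      by (cases ob) (auto simp: Int_stable_def)
  next
    show "disjoint_family_on I UNIV" unfolding disjoint_family_on_def I_def by auto
  qed
  moreover have "sigma_sets (space M) (\<Union>ob\<in>I True. Fam ob) = sets (Gs i)"
  proof -
    have "(\<Union>ob\<in>I True. Fam ob) = Gen i" unfolding I_def by auto
    then show ?thesis by (simp add: sets_Gs)
  qed
  moreover have "sigma_sets (space M) (\<Union>ob\<in>I False. Fam ob) = sets (FV (Suc i))"
  proof -
    have "(\<Union>ob\<in>I False. Fam ob) = sets (FV (Suc i))" unfolding I_def by auto
    then show ?thesis using sets.sigma_sets_eq[of "FV (Suc i)"] by simp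
  qed
  ultimately show ?thesis unfolding P.indep_set_def
    by (rule_tac P.indep_sets_mono_sets) (auto split: bool.split)
qed

end


context rru_setting begin

lemma qmu_V_FV: "(\<lambda>\<omega>. qmu (V j \<omega>)) \<in> borel_measurable (FV j)"
proof -
  have "(\<lambda>\<omega>. (V j \<omega>, W j \<omega>)) \<in> measurable (FV j) (borel \<Otimes>\<^sub>M borel)"
    by (rule measurable_vimage_algebra1) (auto simp: space_pair_measure)
  then show ?thesis by measurable
qed

lemma qnu_W_FV: "(\<lambda>\<omega>. qnu (W j \<omega>)) \<in> borel_measurable (FV j)"
proof -
  have "(\<lambda>\<omega>. (V j \<omega>, W j \<omega>)) \<in> measurable (FV j) (borel \<Otimes>\<^sub>M borel)"
    by (rule measurable_vimage_algebra1) (auto simp: space_pair_measure)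
  then show ?thesis by measurable
qed

lemma indep_G_FV:
  assumes Z: "Z \<in> borel_measurable (Gs i)" and Q: "Q \<in> borel_measurable (FV (Suc i))"
  shows "P.indep_var borel Z borel Q"
  unfolding P.indep_var_def P.indep_vars_def2
proof
  show "\<forall>b\<in>UNIV. P.random_variable (case_bool borel borel b) (case_bool Z Q b)"
  proof
    fix b :: bool
    have "Q \<in> borel_measurable M"
      by (rule measurable_from_smaller[OF Q]) (use FV_ev in auto)
    then show "P.random_variable (case_bool borel borel b) (case_bool Z Q b)"
      using meas_Gs_M[OF Z] by (cases b) auto
  qed
  show "P.indep_sets (\<lambda>b. {case_bool Z Q b -` A \<inter> space M |A. A \<in> sets (case_bool borel borel b)}) UNIV"
  proof (rule P.indep_sets_mono_sets[OF G_indep[of i, unfolded P.indep_set_def]])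
    fix b :: bool
    show "{case_bool Z Q b -` A \<inter> space M |A. A \<in> sets (case_bool borel borel b)}
        \<subseteq> (case b of True \<Rightarrow> sets (Gs i) | False \<Rightarrow> sets (FV (Suc i)))"
    proof (cases b)
      case True
      then show ?thesis using measurable_sets[OF Z] by (auto simp: space_Gs)
    next
      case False
      then show ?thesis using measurable_sets[OF Q] by auto
    qed
  qed
qed

lemma qmu_V_bound: "AE \<omega> in M. \<bar>qmu (V j \<omega>)\<bar> \<le> \<beta>"
  using AE_VW by eventually_elim (use quantile_range[OF mu] in auto)
lemma qnu_W_bound: "AE \<omega> in M. \<bar>qnu (W j \<omega>)\<bar> \<le> \<beta>"
  using AE_VW by eventually_elim (use quantile_range[OF nu] in auto)

lemma int_qmu_V: "integrable M (\<lambda>\<omega>. qmu (V j \<omega>))"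
  by (rule P.integrable_const_bound[where B=\<beta>]) (use qmu_V_bound in auto)
lemma int_qnu_W: "integrable M (\<lambda>\<omega>. qnu (W j \<omega>))"
  by (rule P.integrable_const_bound[where B=\<beta>]) (use qnu_W_bound in auto)

lemma mean_qmu_V: "(\<integral>\<omega>. qmu (V j \<omega>) \<partial>M) = m"
proof -
  have "(\<integral>\<omega>. qmu (V j \<omega>) \<partial>M) = (\<integral>v. qmu v \<partial>distr M borel (V j))"
    by (subst integral_distr) auto
  also have "\<dots> = m" unfolding V_unif using quantile_int[OF mu] mean_mu by simp
  finally show ?thesis .
qed

lemma mean_qnu_W: "(\<integral>\<omega>. qnu (W j \<omega>) \<partial>M) = m"
proof -
  have "(\<integral>\<omega>. qnu (W j \<omega>) \<partial>M) = (\<integral>v. qnu v \<partial>distr M borel (W j))"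
    by (subst integral_distr) auto
  also have "\<dots> = m" unfolding W_unif using quantile_int[OF nu] mean_nu by simp
  finally show ?thesis .
qed

lemma key_mu:
  assumes Z: "Z \<in> borel_measurable (Gs i)" "integrable M Z"
  shows "(\<integral>\<omega>. Z \<omega> * qmu (V (Suc i) \<omega>) \<partial>M) = (\<integral>\<omega>. Z \<omega> \<partial>M) * m"
    and "integrable M (\<lambda>\<omega>. Z \<omega> * qmu (V (Suc i) \<omega>))"
  using P.indep_var_lebesgue_integral[OF indep_G_FV[OF Z(1) qmu_V_FV] Z(2) int_qmu_V]
    P.indep_var_integrable[OF indep_G_FV[OF Z(1) qmu_V_FV] Z(2) int_qmu_V] mean_qmu_V
  by auto

lemma key_nu:
  assumes Z: "Z \<in> borel_measurable (Gs i)" "integrable M Z"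
  shows "(\<integral>\<omega>. Z \<omega> * qnu (W (Suc i) \<omega>) \<partial>M) = (\<integral>\<omega>. Z \<omega> \<partial>M) * m"
    and "integrable M (\<lambda>\<omega>. Z \<omega> * qnu (W (Suc i) \<omega>))"
  using P.indep_var_lebesgue_integral[OF indep_G_FV[OF Z(1) qnu_W_FV] Z(2) int_qnu_W]
    P.indep_var_integrable[OF indep_G_FV[OF Z(1) qnu_W_FV] Z(2) int_qnu_W] mean_qnu_W
  by auto

end


context rru_setting begin

lemma D_M[measurable]: "(\<lambda>\<omega>. Dr i \<omega>) \<in> borel_measurable M"
  using meas_Gs_M[OF D_Gs] .

lemma step:
  assumes A: "A \<in> sets (Gs i)"
    and [measurable]: "g \<in> borel_measurable borel" "a \<in> borel_measurable borel" "b \<in> borel_measurable borel"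
    and bnd: "\<And>t. D0 \<le> t \<Longrightarrow> \<bar>g t\<bar> \<le> B \<and> \<bar>a t\<bar> \<le> B \<and> \<bar>b t\<bar> \<le> B"
    and ineq: "\<And>t r. D0 \<le> t \<Longrightarrow> 0 \<le> r \<Longrightarrow> r \<le> \<beta> \<Longrightarrow> g (t + r) \<le> a t + r * b t"
  shows "(\<integral>\<omega>. indicator A \<omega> * g (Dr (Suc i) \<omega>) \<partial>M) \<le> (\<integral>\<omega>. indicator A \<omega> * (a (Dr i \<omega>) + m * b (Dr i \<omega>)) \<partial>M)"
proof -
  have B0: "0 \<le> B" using bnd[of D0] by auto
  have AM[measurable]: "A \<in> sets M" using A Gs_M by blast
  have AG[measurable]: "indicator A \<in> borel_measurable (Gs i)" using A by simp
  note [measurable] = D_Gs[of i] I_Gs[of i]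
  define Z1 where "Z1 = (\<lambda>\<omega>. indicator A \<omega> * (if Ir i \<omega> then 1 else 0) * b (Dr i \<omega>))"
  define Z2 where "Z2 = (\<lambda>\<omega>. indicator A \<omega> * (if Ir i \<omega> then 0 else 1) * b (Dr i \<omega>))"
  have Z1G: "Z1 \<in> borel_measurable (Gs i)" unfolding Z1_def by measurable
  have Z2G: "Z2 \<in> borel_measurable (Gs i)" unfolding Z2_def by measurable
  have ind_bnd: "\<bar>indicator A \<omega> * v\<bar> \<le> B" if "\<bar>v\<bar> \<le> B" for \<omega> and v :: real
    using that by (auto simp: indicator_def)
  have Z1i: "integrable M Z1"
    by (rule P.integrable_const_bound[where B=B])
       (use AE_D meas_Gs_M[OF Z1G] bnd B0 in \<open>auto elim!: eventually_mono simp: Z1_def indicator_def\<close>)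
  have Z2i: "integrable M Z2"
    by (rule P.integrable_const_bound[where B=B])
       (use AE_D meas_Gs_M[OF Z2G] bnd B0 in \<open>auto elim!: eventually_mono simp: Z2_def indicator_def\<close>)
  have ia: "integrable M (\<lambda>\<omega>. indicator A \<omega> * a (Dr i \<omega>))"
    by (rule P.integrable_const_bound[where B=B]) (use AE_D bnd B0 in \<open>auto elim!: eventually_mono simp: indicator_def\<close>)
  have ib: "integrable M (\<lambda>\<omega>. indicator A \<omega> * b (Dr i \<omega>))"
    by (rule P.integrable_const_bound[where B=B]) (use AE_D bnd B0 in \<open>auto elim!: eventually_mono simp: indicator_def\<close>)
  have ig: "integrable M (\<lambda>\<omega>. indicator A \<omega> * g (Dr (Suc i) \<omega>))"
    by (rule P.integrable_const_bound[where B=B]) (use AE_D bnd B0 in \<open>auto elim!: eventually_mono simp: indicator_def\<close>)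
  have k1: "(\<integral>\<omega>. Z1 \<omega> * qmu (V (Suc i) \<omega>) \<partial>M) = (\<integral>\<omega>. Z1 \<omega> \<partial>M) * m" "integrable M (\<lambda>\<omega>. Z1 \<omega> * qmu (V (Suc i) \<omega>))"
    using key_mu[OF Z1G Z1i] by auto
  have k2: "(\<integral>\<omega>. Z2 \<omega> * qnu (W (Suc i) \<omega>) \<partial>M) = (\<integral>\<omega>. Z2 \<omega> \<partial>M) * m" "integrable M (\<lambda>\<omega>. Z2 \<omega> * qnu (W (Suc i) \<omega>))"
    using key_nu[OF Z2G Z2i] by auto
  have "(\<integral>\<omega>. indicator A \<omega> * g (Dr (Suc i) \<omega>) \<partial>M)
      \<le> (\<integral>\<omega>. indicator A \<omega> * a (Dr i \<omega>) + (Z1 \<omega> * qmu (V (Suc i) \<omega>) + Z2 \<omega> * qnu (W (Suc i) \<omega>)) \<partial>M)"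
  proof (rule integral_mono_AE)
    show "integrable M (\<lambda>\<omega>. indicator A \<omega> * a (Dr i \<omega>) + (Z1 \<omega> * qmu (V (Suc i) \<omega>) + Z2 \<omega> * qnu (W (Suc i) \<omega>)))"
      using ia k1(2) k2(2) by auto
    show "AE \<omega> in M. indicator A \<omega> * g (Dr (Suc i) \<omega>)
        \<le> indicator A \<omega> * a (Dr i \<omega>) + (Z1 \<omega> * qmu (V (Suc i) \<omega>) + Z2 \<omega> * qnu (W (Suc i) \<omega>))"
      using AE_D AE_R
    proof eventually_elim
      case (elim \<omega>)
      have t: "D0 \<le> Dr i \<omega>" and r: "0 \<le> Rr i \<omega>" "Rr i \<omega> \<le> \<beta>" using elim by auto
      have "g (Dr (Suc i) \<omega>) \<le> a (Dr i \<omega>) + Rr i \<omega> * b (Dr i \<omega>)"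
        unfolding D_Suc by (rule ineq[OF t r])
      then have "indicator A \<omega> * g (Dr (Suc i) \<omega>) \<le> indicator A \<omega> * (a (Dr i \<omega>) + Rr i \<omega> * b (Dr i \<omega>))"
        by (auto simp: indicator_def)
      also have "\<dots> = indicator A \<omega> * a (Dr i \<omega>) + (Z1 \<omega> * qmu (V (Suc i) \<omega>) + Z2 \<omega> * qnu (W (Suc i) \<omega>))"
        unfolding Z1_def Z2_def by (auto simp: algebra_simps)
      finally show ?case .
    qed
  qed (use ig in auto)
  also have "\<dots> = (\<integral>\<omega>. indicator A \<omega> * a (Dr i \<omega>) \<partial>M) + ((\<integral>\<omega>. Z1 \<omega> \<partial>M) * m + (\<integral>\<omega>. Z2 \<omega> \<partial>M) * m)"
    using ia k1 k2 by simp
  also have "(\<integral>\<omega>. Z1 \<omega> \<partial>M) * m + (\<integral>\<omega>. Z2 \<omega> \<partial>M) * m = m * (\<integral>\<omega>. indicator A \<omega> * b (Dr i \<omega>) \<partial>M)"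
  proof -
    have "(\<integral>\<omega>. Z1 \<omega> \<partial>M) + (\<integral>\<omega>. Z2 \<omega> \<partial>M) = (\<integral>\<omega>. Z1 \<omega> + Z2 \<omega> \<partial>M)" using Z1i Z2i by simp
    also have "\<dots> = (\<integral>\<omega>. indicator A \<omega> * b (Dr i \<omega>) \<partial>M)"
    proof -
      have "(\<lambda>\<omega>. Z1 \<omega> + Z2 \<omega>) = (\<lambda>\<omega>. indicator A \<omega> * b (Dr i \<omega>))"
        unfolding Z1_def Z2_def by (auto simp: fun_eq_iff algebra_simps)
      then show ?thesis by simp
    qed
    finally show ?thesis by (metis distrib_left mult.commute)
  qed
  also have "(\<integral>\<omega>. indicator A \<omega> * a (Dr i \<omega>) \<partial>M) + m * (\<integral>\<omega>. indicator A \<omega> * b (Dr i \<omega>) \<partial>M)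
      = (\<integral>\<omega>. indicator A \<omega> * (a (Dr i \<omega>) + m * b (Dr i \<omega>)) \<partial>M)"
    using ia ib by (simp add: algebra_simps)
  finally show ?thesis .
qed

end


lemma hpot_bnd:
  assumes "t > 0" "a \<ge> 0" "J \<ge> 0"
  shows "0 \<le> hpot a J t" "hpot a J t \<le> 1 / t"
proof -
  show "0 \<le> hpot a J t" using assms unfolding hpot_def by (intro divide_nonneg_pos) auto
  have "hpot a J t = (t + a) / (t + a + J) * (1 / t)" unfolding hpot_def by simp
  also have "\<dots> \<le> 1 * (1 / t)"
    using assms by (intro mult_right_mono) auto
  finally show "hpot a J t \<le> 1 / t" by simp
qed

lemma hpot_meas[measurable]: "hpot a J \<in> borel_measurable borel"
  unfolding hpot_def by measurable

context rru_setting begin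

lemma m_le_beta: "m \<le> \<beta>"
proof -
  have "m = (\<integral>\<omega>. qmu (V 0 \<omega>) \<partial>M)" using mean_qmu_V by simp
  also have "\<dots> \<le> (\<integral>\<omega>. \<beta> \<partial>M)"
    by (rule integral_mono_AE) (use int_qmu_V in simp, simp, use qmu_V_bound[of 0] in \<open>eventually_elim, simp\<close>)
  finally show ?thesis by (simp add: P.prob_space)
qed

lemma space_Gs_in: "space M \<in> sets (Gs i)"
  using sets.top[of "Gs i"] by (simp add: space_Gs)

lemma int_bounded_D:
  fixes B :: real
  assumes [measurable]: "f \<in> borel_measurable borel" and "\<And>t. D0 \<le> t \<Longrightarrow> \<bar>f t\<bar> \<le> B"
  shows "integrable M (\<lambda>\<omega>. f (Dr i \<omega>))"
  by (rule P.integrable_const_bound[where B=B]) (use AE_D assms(2) in \<open>auto elim!: eventually_mono\<close>)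

lemma part1_step:
  assumes J: "J \<ge> 0"
  shows "(\<integral>\<omega>. hpot (\<beta> - m) J (Dr (Suc i) \<omega>) \<partial>M) \<le> (\<integral>\<omega>. hpot (\<beta> - m) (J + m) (Dr i \<omega>) \<partial>M)"
proof -
  define a where "a = \<beta> - m"
  have a: "a \<ge> 0" using m_le_beta by (simp add: a_def)
  have b: "\<beta> = a + m" by (simp add: a_def)
  define g where "g = hpot a J"
  define bb where "bb = (\<lambda>t. (g (t + \<beta>) - g t) / \<beta>)"
  have gb: "\<bar>g t\<bar> \<le> 1 / D0" if "D0 \<le> t" for t
  proof -
    have "t > 0" using that D0_pos by linarith
    then have "0 \<le> g t" "g t \<le> 1 / t" using hpot_bnd[of t a J] a J by (auto simp: g_def)
    moreover have "1 / t \<le> 1 / D0" using that D0_pos by (intro inv_antimono) auto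
    ultimately show ?thesis by simp
  qed
  have bnd: "\<bar>g t\<bar> \<le> 1 / D0 + 2 / (D0 * \<beta>) \<and> \<bar>g t\<bar> \<le> 1 / D0 + 2 / (D0 * \<beta>) \<and> \<bar>bb t\<bar> \<le> 1 / D0 + 2 / (D0 * \<beta>)"
    if "D0 \<le> t" for t
  proof -
    have p: "0 \<le> 2 / (D0 * \<beta>)" "0 \<le> 1 / D0" using D0_pos beta_pos by auto
    have g1: "\<bar>g t\<bar> \<le> 1 / D0" "\<bar>g (t + \<beta>)\<bar> \<le> 1 / D0" using gb that beta_pos by auto
    have "\<bar>bb t\<bar> = \<bar>g (t + \<beta>) - g t\<bar> / \<beta>" unfolding bb_def using beta_pos by simp
    also have "\<dots> \<le> (2 / D0) / \<beta>" using g1 beta_pos by (intro divide_right_mono) auto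
    also have "\<dots> = 2 / (D0 * \<beta>)" by simp
    finally show ?thesis using g1 p by linarith
  qed
  have ch: "chordp D0 \<beta> g" unfolding g_def by (rule hpot_chord) (use D0_pos a J beta_pos in auto)
  have "(\<integral>\<omega>. indicator (space M) \<omega> * g (Dr (Suc i) \<omega>) \<partial>M)
      \<le> (\<integral>\<omega>. indicator (space M) \<omega> * (g (Dr i \<omega>) + m * bb (Dr i \<omega>)) \<partial>M)"
  proof (rule step[OF space_Gs_in])
    show "g \<in> borel_measurable borel" "g \<in> borel_measurable borel" "bb \<in> borel_measurable borel" unfolding g_def bb_def by measurable
    show "\<And>t. D0 \<le> t \<Longrightarrow> \<bar>g t\<bar> \<le> 1 / D0 + 2 / (D0 * \<beta>) \<and> \<bar>g t\<bar> \<le> 1 / D0 + 2 / (D0 * \<beta>) \<and> \<bar>bb t\<bar> \<le> 1 / D0 + 2 / (D0 * \<beta>)"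
      by (rule bnd)
    fix t r assume "D0 \<le> t" "0 \<le> r" "r \<le> \<beta>"
    then have "g (t + r) \<le> g t + r / \<beta> * (g (t + \<beta>) - g t)" using ch unfolding chordp_def by auto
    moreover have "r / \<beta> * (g (t + \<beta>) - g t) = r * bb t" unfolding bb_def by simp
    ultimately show "g (t + r) \<le> g t + r * bb t" by linarith
  qed
  also have "\<dots> \<le> (\<integral>\<omega>. hpot a (J + m) (Dr i \<omega>) \<partial>M)"
  proof (rule integral_mono_AE)
    have gm: "g \<in> borel_measurable borel" "bb \<in> borel_measurable borel" unfolding g_def bb_def by measurable
    have i1: "integrable M (\<lambda>\<omega>. g (Dr i \<omega>))"
      by (rule int_bounded_D[OF gm(1), where B="1 / D0 + 2 / (D0 * \<beta>)"]) (use bnd in blast)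
    have i2: "integrable M (\<lambda>\<omega>. bb (Dr i \<omega>))"
      by (rule int_bounded_D[OF gm(2), where B="1 / D0 + 2 / (D0 * \<beta>)"]) (use bnd in blast)
    have i3: "integrable M (\<lambda>\<omega>. g (Dr i \<omega>) + m * bb (Dr i \<omega>))"
      using Bochner_Integration.integrable_add[OF i1 integrable_mult_right[OF i2]] .
    show "integrable M (\<lambda>\<omega>. indicator (space M) \<omega> * (g (Dr i \<omega>) + m * bb (Dr i \<omega>)))"
      using integrable_mult_indicator[OF sets.top i3] by simp
    show "integrable M (\<lambda>\<omega>. hpot a (J + m) (Dr i \<omega>))"
    proof (rule int_bounded_D[where B="1 / D0"])
      fix t assume t: "D0 \<le> t"
      then have "t > 0" using D0_pos by linarith
      then have "0 \<le> hpot a (J + m) t" "hpot a (J + m) t \<le> 1 / t" using hpot_bnd[of t a "J + m"] a J m_pos by auto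
      moreover have "1 / t \<le> 1 / D0" using t D0_pos by (intro inv_antimono) auto
      ultimately show "\<bar>hpot a (J + m) t\<bar> \<le> 1 / D0" by simp
    qed simp
    show "AE \<omega> in M. indicator (space M) \<omega> * (g (Dr i \<omega>) + m * bb (Dr i \<omega>)) \<le> hpot a (J + m) (Dr i \<omega>)"
      using AE_D AE_space
    proof eventually_elim
      case (elim \<omega>)
      then have t: "Dr i \<omega> > 0" using D0_pos by (meson less_le_trans)
      have "g (Dr i \<omega>) + m * bb (Dr i \<omega>) = g (Dr i \<omega>) + m / (a + m) * (g (Dr i \<omega> + (a + m)) - g (Dr i \<omega>))"
        unfolding bb_def b by simp
      also have "\<dots> \<le> hpot a (J + m) (Dr i \<omega>)" unfolding g_def by (rule hpot_rec[OF t a J m_pos])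
      finally show ?case using elim by simp
    qed
  qed
  finally have "(\<integral>\<omega>. indicator (space M) \<omega> * g (Dr (Suc i) \<omega>) \<partial>M) \<le> (\<integral>\<omega>. hpot a (J + m) (Dr i \<omega>) \<partial>M)" .
  moreover have "(\<integral>\<omega>. indicator (space M) \<omega> * g (Dr (Suc i) \<omega>) \<partial>M) = (\<integral>\<omega>. g (Dr (Suc i) \<omega>) \<partial>M)"
    by (rule Bochner_Integration.integral_cong) auto
  ultimately show ?thesis unfolding g_def a_def by simp
qed

lemma part1:
  assumes "k \<ge> 1"
  shows "(\<integral>\<omega>. 1 / Dr k \<omega> \<partial>M) \<le> (1 + (\<beta> - m) / (x + y)) / ((x + y) + m * (real k - 1) + \<beta>)"
proof -
  define a where "a = \<beta> - m"
  have a: "a \<ge> 0" using m_le_beta by (simp add: a_def)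
  have chain: "(\<integral>\<omega>. hpot a 0 (Dr k \<omega>) \<partial>M) \<le> (\<integral>\<omega>. hpot a (m * real j) (Dr (k - j) \<omega>) \<partial>M)" if "j \<le> k" for j
    using that
  proof (induction j)
    case 0 then show ?case by simp
  next
    case (Suc j)
    have kj: "k - j = Suc (k - Suc j)" using Suc.prems by simp
    have "(\<integral>\<omega>. hpot a (m * real j) (Dr (k - j) \<omega>) \<partial>M) \<le> (\<integral>\<omega>. hpot a (m * real j + m) (Dr (k - Suc j) \<omega>) \<partial>M)"
      unfolding kj a_def by (rule part1_step) (use m_pos in simp)
    then show ?case using Suc by (simp add: algebra_simps)
  qed
  have "(\<integral>\<omega>. 1 / Dr k \<omega> \<partial>M) = (\<integral>\<omega>. hpot a 0 (Dr k \<omega>) \<partial>M)"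
  proof (rule integral_cong_AE)
    show "AE \<omega> in M. 1 / Dr k \<omega> = hpot a 0 (Dr k \<omega>)"
      using AE_D
    proof eventually_elim
      case (elim \<omega>)
      then have "Dr k \<omega> > 0" using D0_pos by (meson less_le_trans)
      then show ?case using a unfolding hpot_def by simp
    qed
  qed auto
  also have "\<dots> \<le> (\<integral>\<omega>. hpot a (m * real k) (Dr 0 \<omega>) \<partial>M)" using chain[of k] by simp
  also have "\<dots> = hpot a (m * real k) D0" by (simp add: D_0 P.prob_space)
  also have "\<dots> = (1 + (\<beta> - m) / (x + y)) / ((x + y) + m * (real k - 1) + \<beta>)"
    using D0_pos unfolding hpot_def a_def by (simp add: field_simps)
  finally show ?thesis .
qed

end


lemma (in sigma_finite_subalgebra) cond_exp_le_from_int: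
  fixes f g :: "'a \<Rightarrow> real"
  assumes f: "integrable M f" and g: "integrable M g" and gF: "g \<in> borel_measurable F"
    and le: "\<And>A. A \<in> sets F \<Longrightarrow> (\<integral>x. indicator A x * f x \<partial>M) \<le> (\<integral>x. indicator A x * g x \<partial>M)"
  shows "AE x in M. real_cond_exp M F f x \<le> g x"
proof -
  let ?h = "real_cond_exp M F f"
  define B where "B = {x \<in> space M. g x < ?h x}"
  have BF: "B \<in> sets F"
  proof -
    have sp: "space F = space M" using subalg by (simp add: subalgebra_def)
    have "{x \<in> space F. g x < ?h x} \<in> sets F" using gF by measurable
    then show ?thesis unfolding B_def sp .
  qed
  have BM: "B \<in> sets M" using BF subalg by (auto simp: subalgebra_def)
  have hi: "integrable M ?h" using real_cond_exp_int(1)[OF f] .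
  have "(\<integral>x\<in>B. f x \<partial>M) = (\<integral>x\<in>B. ?h x \<partial>M)" by (rule real_cond_exp_intA[OF f BF])
  then have e1: "(\<integral>x. indicator B x * ?h x \<partial>M) = (\<integral>x. indicator B x * f x \<partial>M)"
    unfolding set_lebesgue_integral_def by simp
  have "(\<integral>x. indicator B x * (?h x - g x) \<partial>M) = (\<integral>x. indicator B x * ?h x \<partial>M) - (\<integral>x. indicator B x * g x \<partial>M)"
    using integrable_mult_indicator[OF BM hi] integrable_mult_indicator[OF BM g]
    by (simp add: right_diff_distrib)
  also have "\<dots> \<le> 0" using e1 le[OF BF] by simp
  finally have le0: "(\<integral>x. indicator B x * (?h x - g x) \<partial>M) \<le> 0" .
  have nn: "\<And>x. 0 \<le> indicator B x * (?h x - g x)" by (auto simp: indicator_def B_def)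
  have int: "integrable M (\<lambda>x. indicator B x * (?h x - g x))"
    using integrable_mult_indicator[OF BM Bochner_Integration.integrable_diff[OF hi g]] by simp
  have "(\<integral>x. indicator B x * (?h x - g x) \<partial>M) = 0"
  proof -
    have "0 \<le> (\<integral>x. indicator B x * (?h x - g x) \<partial>M)"
      by (rule Bochner_Integration.integral_nonneg) (use nn in auto)
    then show ?thesis using le0 by linarith
  qed
  then have "AE x in M. indicator B x * (?h x - g x) = 0"
    using integral_nonneg_eq_0_iff_AE[OF int] nn by auto
  then show ?thesis
  proof (rule AE_mp[OF _ AE_I2], intro impI)
    fix x assume x: "x \<in> space M" and "indicator B x * (?h x - g x) = 0"
    then show "?h x \<le> g x" by (auto simp: B_def indicator_def)
  qed
qed

lemma Vf_meas[measurable]: "(\<lambda>y. Vf p \<beta> c k y) \<in> borel_measurable borel"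
proof (induction k)
  case 0 then show ?case by (simp add: Vf_0)
next
  case (Suc k)
  have "(\<lambda>y. Vf p \<beta> c k (y + \<beta>)) \<in> borel_measurable borel"
    using measurable_compose[OF _ Suc] by measurable
  then show ?case unfolding Vf_rec using Suc by measurable
qed


context rru_setting begin

abbreviation "Fn n \<equiv> rru_filt M \<mu> \<nu> x y U V W n"
abbreviation "Psi i \<equiv> (\<lambda>\<omega>. (rru_ind \<mu> \<nu> x y U V W i \<omega>, qmu (V i \<omega>), qnu (W i \<omega>)))"
abbreviation "NN \<equiv> (count_space UNIV \<Otimes>\<^sub>M borel \<Otimes>\<^sub>M borel) :: (bool \<times> real \<times> real) measure"
abbreviation "GenF n \<equiv> (\<Union>i\<in>{1..n}. {Psi i -` A \<inter> space M | A. A \<in> sets NN})"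

lemma ind_eq: "rru_ind \<mu> \<nu> x y U V W (Suc j) \<omega> = Ir j \<omega>"
  by (simp add: rru_ind_def split: prod.split)

lemma GenF_Pow: "GenF n \<subseteq> Pow (space M)" by auto

lemma Fn_eq: "Fn n = sigma (space M) (GenF n)"
  unfolding rru_filt_def by simp

lemma sets_Fn: "sets (Fn n) = sigma_sets (space M) (GenF n)"
  unfolding Fn_eq using GenF_Pow by simp
lemma space_Fn: "space (Fn n) = space M"
  unfolding Fn_eq using GenF_Pow by simp

lemma Psi_Gs: "i \<in> {1..n} \<Longrightarrow> Psi i \<in> measurable (Gs n) NN"
proof -
  assume i: "i \<in> {1..n}"
  then obtain j where j: "i = Suc j" "j < n" by (cases i) auto
  have p: "Measurable.pred (Gs n) (\<lambda>\<omega>. Ir j \<omega>)"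
    using meas_Gs_mono[OF I_Gs[of j]] j by simp
  have v: "(\<lambda>\<omega>. qmu (V (Suc j) \<omega>)) \<in> borel_measurable (Gs n)" "(\<lambda>\<omega>. qnu (W (Suc j) \<omega>)) \<in> borel_measurable (Gs n)"
    using measurable_compose[OF V_Gs qmu_meas] measurable_compose[OF W_Gs qnu_meas] j by auto
  show ?thesis unfolding j(1) ind_eq by (intro measurable_Pair p v)
qed

lemma Fn_Gs: "sets (Fn n) \<subseteq> sets (Gs n)"
  unfolding sets_Fn
proof (rule sets.sigma_sets_subset[of _ "Gs n", unfolded space_Gs])
  show "GenF n \<subseteq> sets (Gs n)"
  proof safe
    fix i A assume i: "i \<in> {1..n}" and A: "A \<in> sets NN"
    show "Psi i -` A \<inter> space M \<in> sets (Gs n)"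
      using measurable_sets[OF Psi_Gs[OF i] A] by (simp add: space_Gs)
  qed
qed

lemma Fn_M: "sets (Fn n) \<subseteq> sets M" using Fn_Gs Gs_M by blast

lemma Fn_Gs_mono: "n \<le> i \<Longrightarrow> sets (Fn n) \<subseteq> sets (Gs i)" using Fn_Gs Gs_mono by blast

lemma subalg_Fn: "subalgebra M (Fn n)"
  unfolding subalgebra_def using Fn_M space_Fn by simp

lemma Psi_Fn: "i \<in> {1..n} \<Longrightarrow> Psi i \<in> measurable (Fn n) NN"
  unfolding measurable_def
proof safe
  fix A assume i: "i \<in> {1..n}" and A: "A \<in> sets NN"
  have "Psi i -` A \<inter> space M \<in> GenF n" using i A by blast
  then show "Psi i -` A \<inter> space (Fn n) \<in> sets (Fn n)" unfolding sets_Fn space_Fn by auto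
qed (auto simp: space_pair_measure)

lemma ind_Fn: "i \<in> {1..n} \<Longrightarrow> Measurable.pred (Fn n) (rru_ind \<mu> \<nu> x y U V W i)"
  using measurable_compose[OF Psi_Fn measurable_fst] by simp
lemma qmuV_Fn: "i \<in> {1..n} \<Longrightarrow> (\<lambda>\<omega>. qmu (V i \<omega>)) \<in> borel_measurable (Fn n)"
  using measurable_compose[OF measurable_compose[OF Psi_Fn measurable_snd] measurable_fst] by simp
lemma qnuW_Fn: "i \<in> {1..n} \<Longrightarrow> (\<lambda>\<omega>. qnu (W i \<omega>)) \<in> borel_measurable (Fn n)"
  using measurable_compose[OF measurable_compose[OF Psi_Fn measurable_snd] measurable_snd] by simp

lemma XY_Fn: "j \<le> n \<Longrightarrow> (\<lambda>\<omega>. Xr j \<omega>) \<in> borel_measurable (Fn n) \<and> (\<lambda>\<omega>. Yr j \<omega>) \<in> borel_measurable (Fn n)"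
proof (induction j)
  case 0 then show ?case by simp
next
  case (Suc j)
  then have ih: "(\<lambda>\<omega>. Xr j \<omega>) \<in> borel_measurable (Fn n)" "(\<lambda>\<omega>. Yr j \<omega>) \<in> borel_measurable (Fn n)" by auto
  have j: "Suc j \<in> {1..n}" using Suc.prems by auto
  note [measurable] = ih ind_Fn[OF j] qmuV_Fn[OF j] qnuW_Fn[OF j]
  have eX: "(\<lambda>\<omega>. Xr (Suc j) \<omega>) = (\<lambda>\<omega>. Xr j \<omega> + (if rru_ind \<mu> \<nu> x y U V W (Suc j) \<omega> then qmu (V (Suc j) \<omega>) else 0))"
    unfolding ind_eq X_Suc ..
  have eY: "(\<lambda>\<omega>. Yr (Suc j) \<omega>) = (\<lambda>\<omega>. Yr j \<omega> + (if rru_ind \<mu> \<nu> x y U V W (Suc j) \<omega> then 0 else qnu (W (Suc j) \<omega>)))"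
    unfolding ind_eq Y_Suc ..
  show ?case unfolding eX eY by measurable
qed

lemma D_Fn: "(\<lambda>\<omega>. Dr n \<omega>) \<in> borel_measurable (Fn n)"
proof -
  note [measurable] = XY_Fn[of n n, THEN conjunct1] XY_Fn[of n n, THEN conjunct2]
  show ?thesis unfolding D_def' by measurable
qed

end


context rru_setting begin

lemma p_range: "0 \<le> m / \<beta>" "m / \<beta> \<le> 1"
  using m_pos beta_pos m_le_beta by auto

lemma V_step:
  assumes A: "A \<in> sets (Gs i)" and c: "c \<ge> 0"
  shows "(\<integral>\<omega>. indicator A \<omega> * Vf (m / \<beta>) \<beta> c j (Dr (Suc i) \<omega>) \<partial>M)
       \<le> (\<integral>\<omega>. indicator A \<omega> * Vf (m / \<beta>) \<beta> c (Suc j) (Dr i \<omega>) \<partial>M)"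
proof -
  define g where "g = Vf (m / \<beta>) \<beta> c j"
  define bb where "bb = (\<lambda>t. (g (t + \<beta>) - g t) / \<beta>)"
  have gb: "\<bar>g t\<bar> \<le> 1 / D0" if "D0 \<le> t" for t
  proof -
    have ct: "c + t > 0" using that D0_pos c by linarith
    then have "0 \<le> g t" "g t \<le> 1 / (c + t)"
      using Vf_bounds[OF p_range ct, of \<beta> j] beta_pos by (auto simp: g_def)
    moreover have "1 / (c + t) \<le> 1 / D0" using that D0_pos c by (intro inv_antimono) auto
    ultimately show ?thesis by simp
  qed
  have bnd: "\<bar>g t\<bar> \<le> 1 / D0 + 2 / (D0 * \<beta>) \<and> \<bar>g t\<bar> \<le> 1 / D0 + 2 / (D0 * \<beta>) \<and> \<bar>bb t\<bar> \<le> 1 / D0 + 2 / (D0 * \<beta>)"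
    if "D0 \<le> t" for t
  proof -
    have p: "0 \<le> 2 / (D0 * \<beta>)" "0 \<le> 1 / D0" using D0_pos beta_pos by auto
    have g1: "\<bar>g t\<bar> \<le> 1 / D0" "\<bar>g (t + \<beta>)\<bar> \<le> 1 / D0" using gb that beta_pos by auto
    have "\<bar>bb t\<bar> = \<bar>g (t + \<beta>) - g t\<bar> / \<beta>" unfolding bb_def using beta_pos by simp
    also have "\<dots> \<le> (2 / D0) / \<beta>" using g1 beta_pos by (intro divide_right_mono) auto
    also have "\<dots> = 2 / (D0 * \<beta>)" by simp
    finally show ?thesis using g1 p by linarith
  qed
  have ch: "chordp D0 \<beta> g" unfolding g_def by (rule Vf_chord[OF p_range]) (use D0_pos c beta_pos in auto)
  have "(\<integral>\<omega>. indicator A \<omega> * g (Dr (Suc i) \<omega>) \<partial>M)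
      \<le> (\<integral>\<omega>. indicator A \<omega> * (g (Dr i \<omega>) + m * bb (Dr i \<omega>)) \<partial>M)"
  proof (rule step[OF A])
    show "g \<in> borel_measurable borel" "g \<in> borel_measurable borel" "bb \<in> borel_measurable borel"
      unfolding g_def bb_def by measurable
    show "\<And>t. D0 \<le> t \<Longrightarrow> \<bar>g t\<bar> \<le> 1 / D0 + 2 / (D0 * \<beta>) \<and> \<bar>g t\<bar> \<le> 1 / D0 + 2 / (D0 * \<beta>) \<and> \<bar>bb t\<bar> \<le> 1 / D0 + 2 / (D0 * \<beta>)"
      by (rule bnd)
    fix t r assume "D0 \<le> t" "0 \<le> r" "r \<le> \<beta>"
    then have "g (t + r) \<le> g t + r / \<beta> * (g (t + \<beta>) - g t)" using ch unfolding chordp_def by auto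
    moreover have "r / \<beta> * (g (t + \<beta>) - g t) = r * bb t" unfolding bb_def by simp
    ultimately show "g (t + r) \<le> g t + r * bb t" by linarith
  qed
  also have "\<dots> = (\<integral>\<omega>. indicator A \<omega> * Vf (m / \<beta>) \<beta> c (Suc j) (Dr i \<omega>) \<partial>M)"
  proof (rule Bochner_Integration.integral_cong)
    fix \<omega>
    have "g (Dr i \<omega>) + m * bb (Dr i \<omega>) = Vf (m / \<beta>) \<beta> c (Suc j) (Dr i \<omega>)"
      unfolding Vf_rec g_def bb_def using beta_pos by (simp add: field_simps)
    then show "indicator A \<omega> * (g (Dr i \<omega>) + m * bb (Dr i \<omega>)) = indicator A \<omega> * Vf (m / \<beta>) \<beta> c (Suc j) (Dr i \<omega>)"
      by simp
  qed simp
  finally show ?thesis unfolding g_def .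
qed

lemma L_step:
  assumes A: "A \<in> sets (Gs i)" and d: "d \<ge> 0"
  shows "(\<integral>\<omega>. indicator A \<omega> * (1 / (d + Dr i \<omega> + m * real (Suc j))) \<partial>M)
       \<le> (\<integral>\<omega>. indicator A \<omega> * (1 / (d + Dr (Suc i) \<omega> + m * real j)) \<partial>M)"
proof -
  define w where "w = (\<lambda>t. d + t + m * real (Suc j))"
  define g where "g = (\<lambda>t. - (1 / (d + t + m * real j)))"
  define a where "a = (\<lambda>t. - (1 / w t + m / (w t)^2))"
  define b where "b = (\<lambda>t. 1 / (w t)^2)"
  define B where "B = 1 / D0 + m / D0^2 + 1 / D0^2"
  have mj: "m * real j \<ge> 0" "m * real (Suc j) \<ge> 0" using m_pos by auto
  have wpos: "w t \<ge> D0" if "D0 \<le> t" for t using that d mj unfolding w_def by linarith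
  have bnd: "\<bar>g t\<bar> \<le> B \<and> \<bar>a t\<bar> \<le> B \<and> \<bar>b t\<bar> \<le> B" if t: "D0 \<le> t" for t
  proof -
    have w0: "w t > 0" "D0 \<le> w t" using wpos[OF t] D0_pos by auto
    have i1: "1 / w t \<le> 1 / D0" using w0 D0_pos by (intro inv_antimono) auto
    have sq: "D0^2 \<le> (w t)^2" using w0 D0_pos by (intro power_mono) auto
    have i2: "1 / (w t)^2 \<le> 1 / D0^2" using sq D0_pos by (intro inv_antimono) auto
    have i3: "m / (w t)^2 \<le> m / D0^2" using mult_left_mono[OF i2, of m] m_pos by simp
    have gpos: "d + t + m * real j \<ge> D0" using t d mj by linarith
    have i4: "1 / (d + t + m * real j) \<le> 1 / D0" using gpos D0_pos by (intro inv_antimono) auto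
    have nn: "0 \<le> 1 / w t" "0 \<le> m / (w t)^2" "0 \<le> 1 / (w t)^2" "0 \<le> 1 / (d + t + m * real j)"
      "0 \<le> m / D0^2" "0 \<le> 1 / D0^2" "0 \<le> 1 / D0"
      using w0 m_pos gpos D0_pos by auto
    have e1: "\<bar>g t\<bar> = 1 / (d + t + m * real j)" unfolding g_def using nn(4) by simp
    have e2: "\<bar>a t\<bar> = 1 / w t + m / (w t)^2"
    proof -
      have "0 \<le> 1 / w t + m / (w t)^2" using nn(1,2) by linarith
      then show ?thesis unfolding a_def by (simp only: abs_minus_cancel abs_of_nonneg)
    qed
    have e3: "\<bar>b t\<bar> = 1 / (w t)^2" unfolding b_def using nn(3) by simp
    show ?thesis unfolding e1 e2 e3 B_def using i1 i2 i3 i4 nn by linarith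
  qed
  have "(\<integral>\<omega>. indicator A \<omega> * g (Dr (Suc i) \<omega>) \<partial>M)
      \<le> (\<integral>\<omega>. indicator A \<omega> * (a (Dr i \<omega>) + m * b (Dr i \<omega>)) \<partial>M)"
  proof (rule step[OF A])
    show "g \<in> borel_measurable borel" "a \<in> borel_measurable borel" "b \<in> borel_measurable borel"
      unfolding g_def a_def b_def w_def by measurable
    show "\<And>t. D0 \<le> t \<Longrightarrow> \<bar>g t\<bar> \<le> B \<and> \<bar>a t\<bar> \<le> B \<and> \<bar>b t\<bar> \<le> B" by (rule bnd)
    fix t r assume t: "D0 \<le> t" and r: "0 \<le> r" "r \<le> \<beta>"
    have w0: "w t > 0" using wpos[OF t] D0_pos by auto
    have z0: "d + (t + r) + m * real j > 0" using t r d mj D0_pos by linarith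
    have "1 / w t - ((d + (t + r) + m * real j) - w t) / (w t)^2 \<le> 1 / (d + (t + r) + m * real j)"
      by (rule tangent_inv[OF w0 z0])
    moreover have "(d + (t + r) + m * real j) - w t = r - m" unfolding w_def by (simp add: algebra_simps)
    ultimately have "1 / w t - (r - m) / (w t)^2 \<le> 1 / (d + (t + r) + m * real j)" by simp
    moreover have "1 / w t - (r - m) / (w t)^2 = 1 / w t + m / (w t)^2 - r * (1 / (w t)^2)"
      by (simp add: diff_divide_distrib)
    ultimately show "g (t + r) \<le> a t + r * b t" unfolding g_def a_def b_def by (simp add: algebra_simps)
  qed
  also have "\<dots> = (\<integral>\<omega>. - (indicator A \<omega> * (1 / (d + Dr i \<omega> + m * real (Suc j)))) \<partial>M)"
    by (rule Bochner_Integration.integral_cong) (auto simp: a_def b_def w_def)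
  finally have "(\<integral>\<omega>. - (indicator A \<omega> * (1 / (d + Dr (Suc i) \<omega> + m * real j))) \<partial>M)
      \<le> (\<integral>\<omega>. - (indicator A \<omega> * (1 / (d + Dr i \<omega> + m * real (Suc j)))) \<partial>M)"
    unfolding g_def by simp
  then show ?thesis by simp
qed

end


context rru_setting begin

lemma int_ind_D:
  fixes B :: real
  assumes "A \<in> sets M" "f \<in> borel_measurable borel" "\<And>t. D0 \<le> t \<Longrightarrow> \<bar>f t\<bar> \<le> B"
  shows "integrable M (\<lambda>\<omega>. indicator A \<omega> * f (Dr i \<omega>))"
  using integrable_mult_indicator[OF assms(1) int_bounded_D[OF assms(2,3)]] by simp

lemma Vf_abs_bnd: "c \<ge> 0 \<Longrightarrow> D0 \<le> t \<Longrightarrow> \<bar>Vf (m / \<beta>) \<beta> c j t\<bar> \<le> 1 / D0"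
proof -
  assume c: "c \<ge> 0" and t: "D0 \<le> t"
  have ct: "c + t > 0" using t D0_pos c by linarith
  then have "0 \<le> Vf (m / \<beta>) \<beta> c j t" "Vf (m / \<beta>) \<beta> c j t \<le> 1 / (c + t)"
    using Vf_bounds[OF p_range ct, of \<beta> j] beta_pos by auto
  moreover have "1 / (c + t) \<le> 1 / D0" using t D0_pos c by (intro inv_antimono) auto
  ultimately show ?thesis by simp
qed

lemma L_abs_bnd: "d \<ge> 0 \<Longrightarrow> D0 \<le> t \<Longrightarrow> \<bar>1 / (d + t + m * real j)\<bar> \<le> 1 / D0"
proof -
  assume d: "d \<ge> 0" and t: "D0 \<le> t"
  have mj: "m * real j \<ge> 0" using m_pos by simp
  have "D0 \<le> d + t + m * real j" using d t mj by linarith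
  then have "1 / (d + t + m * real j) \<le> 1 / D0" using D0_pos by (intro inv_antimono) auto
  moreover have "0 \<le> 1 / (d + t + m * real j)" using \<open>D0 \<le> d + t + m * real j\<close> D0_pos by simp
  ultimately show ?thesis by simp
qed

lemma upper_chain:
  assumes A: "A \<in> sets (Fn n)" and c: "c \<ge> 0" and j: "j \<le> k"
  shows "(\<integral>\<omega>. indicator A \<omega> * Vf (m / \<beta>) \<beta> c 0 (Dr (n + k) \<omega>) \<partial>M)
       \<le> (\<integral>\<omega>. indicator A \<omega> * Vf (m / \<beta>) \<beta> c j (Dr (n + k - j) \<omega>) \<partial>M)"
  using j
proof (induction j)
  case 0 then show ?case by simp
next
  case (Suc j)
  have e: "n + k - j = Suc (n + k - Suc j)" using Suc.prems by simp
  have "n \<le> n + k - Suc j" using Suc.prems by simp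
  then have AG: "A \<in> sets (Gs (n + k - Suc j))" using A Fn_Gs_mono by blast
  show ?case using Suc.IH Suc.prems V_step[OF AG c, of j] unfolding e by simp
qed

lemma lower_chain:
  assumes A: "A \<in> sets (Fn n)" and d: "d \<ge> 0" and j: "j \<le> k"
  shows "(\<integral>\<omega>. indicator A \<omega> * (1 / (d + Dr (n + k - j) \<omega> + m * real j)) \<partial>M)
       \<le> (\<integral>\<omega>. indicator A \<omega> * (1 / (d + Dr (n + k) \<omega> + m * real 0)) \<partial>M)"
  using j
proof (induction j)
  case 0 then show ?case by simp
next
  case (Suc j)
  have e: "n + k - j = Suc (n + k - Suc j)" using Suc.prems by simp
  have "n \<le> n + k - Suc j" using Suc.prems by simp
  then have AG: "A \<in> sets (Gs (n + k - Suc j))" using A Fn_Gs_mono by blast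
  show ?case using Suc.IH Suc.prems L_step[OF AG d, of j] unfolding e by simp
qed

end


context rru_setting begin

lemma part2:
  assumes D02: "x + y \<ge> 2 * \<beta>" and cd: "0 \<le> c" "c \<le> d"
  shows "AE \<omega> in M.
              \<bar>real_cond_exp M (Fn n)
                 (\<lambda>\<omega>. 1 / (c + Dr (k + n) \<omega>) - 1 / (d + Dr (k + n) \<omega>)) \<omega>\<bar>
              \<le> (\<beta> - m + d) / m *
                 (1 / (c + Dr n \<omega> - \<beta> + m * real k)
                  - 1 / (c + Dr n \<omega> - \<beta> + m * real (k + 1)))"
proof -
  have fms: "finite_measure_subalgebra M (Fn n)"
    unfolding finite_measure_subalgebra_def finite_measure_subalgebra_axioms_def
    using subalg_Fn P.finite_measure_axioms by simp
  interpret S: sigma_finite_subalgebra M "Fn n"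
    by (rule finite_measure_subalgebra_is_sigma_finite[OF fms])
  define f where "f = (\<lambda>\<omega>. 1 / (c + Dr (k + n) \<omega>) - 1 / (d + Dr (k + n) \<omega>))"
  define Tf where "Tf = (\<lambda>t. (\<beta> - m + d) / m * (1 / (c + t - \<beta> + m * real k) - 1 / (c + t - \<beta> + m * real (k + 1))))"
  define T where "T = (\<lambda>\<omega>. Tf (Dr n \<omega>))"
  have d: "d \<ge> 0" using cd by simp
  have bp: "\<beta> > 0" using beta_pos .
  have mk: "m * real k \<ge> 0" "m * real (k + 1) \<ge> 0" using m_pos by auto
  have Tf_meas[measurable]: "Tf \<in> borel_measurable borel" unfolding Tf_def by measurable
  have Tf_bnd: "\<bar>Tf t\<bar> \<le> \<bar>(\<beta> - m + d) / m\<bar> * (2 / \<beta>)" if t: "D0 \<le> t" for t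
  proof -
    have b1: "c + t - \<beta> + m * real k \<ge> \<beta>" "c + t - \<beta> + m * real (k + 1) \<ge> \<beta>"
      using t D02 cd mk by linarith+
    have i1: "1 / (c + t - \<beta> + m * real k) \<le> 1 / \<beta>" "1 / (c + t - \<beta> + m * real (k + 1)) \<le> 1 / \<beta>"
      using b1 bp by (auto intro!: inv_antimono)
    have i0: "0 \<le> 1 / (c + t - \<beta> + m * real k)" "0 \<le> 1 / (c + t - \<beta> + m * real (k + 1))"
      using b1 bp by auto
    have "\<bar>1 / (c + t - \<beta> + m * real k) - 1 / (c + t - \<beta> + m * real (k + 1))\<bar> \<le> 2 / \<beta>"
    proof -
      have h2: "2 / \<beta> = 1 / \<beta> + 1 / \<beta>" by simp
      show ?thesis unfolding abs_le_iff using i0 i1 h2 by linarith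
    qed
    then show ?thesis unfolding Tf_def abs_mult by (intro mult_left_mono) auto
  qed
  have Tint: "integrable M T" unfolding T_def by (rule int_bounded_D[OF Tf_meas Tf_bnd])
  have TF: "T \<in> borel_measurable (Fn n)" unfolding T_def using D_Fn[of n] by measurable
  have fint: "integrable M f"
  proof -
    have "integrable M (\<lambda>\<omega>. (\<lambda>t. 1 / (c + t) - 1 / (d + t)) (Dr (k + n) \<omega>))"
    proof (rule int_bounded_D[where B="2 / D0"])
      fix t assume t: "D0 \<le> t"
      have "\<bar>1 / (c + t)\<bar> \<le> 1 / D0" using L_abs_bnd[OF cd(1) t, of 0] by simp
      moreover have "\<bar>1 / (d + t)\<bar> \<le> 1 / D0" using L_abs_bnd[OF d t, of 0] by simp
      ultimately show "\<bar>1 / (c + t) - 1 / (d + t)\<bar> \<le> 2 / D0" by linarith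
    qed simp
    then show ?thesis unfolding f_def by simp
  qed
  have main: "(\<integral>\<omega>. indicator A \<omega> * f \<omega> \<partial>M) \<le> (\<integral>\<omega>. indicator A \<omega> * T \<omega> \<partial>M)" if A: "A \<in> sets (Fn n)" for A
  proof -
    have AM: "A \<in> sets M" using A Fn_M by blast
    define V0 where "V0 = (\<lambda>\<omega>. indicator A \<omega> * Vf (m / \<beta>) \<beta> c 0 (Dr (n + k) \<omega>))"
    define Vk where "Vk = (\<lambda>\<omega>. indicator A \<omega> * Vf (m / \<beta>) \<beta> c k (Dr n \<omega>))"
    define L0 where "L0 = (\<lambda>\<omega>. indicator A \<omega> * (1 / (d + Dr (n + k) \<omega> + m * real 0)))"
    define Lk where "Lk = (\<lambda>\<omega>. indicator A \<omega> * (1 / (d + Dr n \<omega> + m * real k)))"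
    have iV0: "integrable M V0" unfolding V0_def
      by (rule int_ind_D[OF AM, where B="1 / D0"]) (use Vf_abs_bnd[OF cd(1)] in auto)
    have iVk: "integrable M Vk" unfolding Vk_def
      by (rule int_ind_D[OF AM, where B="1 / D0"]) (use Vf_abs_bnd[OF cd(1)] in auto)
    have iL0: "integrable M L0" unfolding L0_def
      by (rule int_ind_D[OF AM, where f="\<lambda>t. 1 / (d + t + m * real 0)" and B="1 / D0"]) (use L_abs_bnd[OF d, of _ 0] in simp_all)
    have iLk: "integrable M Lk" unfolding Lk_def
      by (rule int_ind_D[OF AM, where f="\<lambda>t. 1 / (d + t + m * real k)" and B="1 / D0"]) (use L_abs_bnd[OF d] in auto)
    have u: "(\<integral>\<omega>. V0 \<omega> \<partial>M) \<le> (\<integral>\<omega>. Vk \<omega> \<partial>M)"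
      using upper_chain[OF A cd(1), of k k] unfolding V0_def Vk_def by simp
    have l: "(\<integral>\<omega>. Lk \<omega> \<partial>M) \<le> (\<integral>\<omega>. L0 \<omega> \<partial>M)"
      using lower_chain[OF A d, of k k] unfolding L0_def Lk_def by simp
    have "(\<integral>\<omega>. indicator A \<omega> * f \<omega> \<partial>M) = (\<integral>\<omega>. V0 \<omega> - L0 \<omega> \<partial>M)"
      unfolding V0_def L0_def f_def by (rule Bochner_Integration.integral_cong) (auto simp: Vf_0 add.commute right_diff_distrib)
    also have "\<dots> = (\<integral>\<omega>. V0 \<omega> \<partial>M) - (\<integral>\<omega>. L0 \<omega> \<partial>M)" using iV0 iL0 by simp
    also have "\<dots> \<le> (\<integral>\<omega>. Vk \<omega> \<partial>M) - (\<integral>\<omega>. Lk \<omega> \<partial>M)" using u l by linarith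
    also have "\<dots> = (\<integral>\<omega>. Vk \<omega> - Lk \<omega> \<partial>M)" using iVk iLk by simp
    also have "\<dots> \<le> (\<integral>\<omega>. indicator A \<omega> * T \<omega> \<partial>M)"
    proof (rule integral_mono_AE)
      show "integrable M (\<lambda>\<omega>. Vk \<omega> - Lk \<omega>)" using iVk iLk by simp
      show "integrable M (\<lambda>\<omega>. indicator A \<omega> * T \<omega>)" using integrable_mult_indicator[OF AM Tint] by simp
      show "AE \<omega> in M. Vk \<omega> - Lk \<omega> \<le> indicator A \<omega> * T \<omega>"
        using AE_D
      proof eventually_elim
        case (elim \<omega>)
        have Dn: "Dr n \<omega> \<ge> 2 * \<beta>" using elim D02 by (meson order.trans)
        have cy: "c + Dr n \<omega> > \<beta>" using Dn cd bp by linarith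
        have "Vf (m / \<beta>) \<beta> c k (Dr n \<omega>) \<le> 1 / (c + Dr n \<omega> - \<beta> + \<beta> * (m / \<beta>) * (real k + 1))"
          by (rule Vf_final) (use m_pos bp m_le_beta cy in auto)
        also have "\<beta> * (m / \<beta>) * (real k + 1) = m * (real k + 1)" using bp by simp
        finally have v: "Vf (m / \<beta>) \<beta> c k (Dr n \<omega>) - 1 / (d + Dr n \<omega> + m * real k) \<le> Tf (Dr n \<omega>)"
          using final_compare[OF m_pos m_le_beta cd Dn, of k] unfolding Tf_def by linarith
        show ?case unfolding Vk_def Lk_def T_def using v by (auto simp: indicator_def)
      qed
    qed
    finally show ?thesis .
  qed
  have le: "AE \<omega> in M. real_cond_exp M (Fn n) f \<omega> \<le> T \<omega>"
    by (rule S.cond_exp_le_from_int[OF fint Tint TF main])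
  have fm: "f \<in> borel_measurable M" using fint by auto
  have ge: "AE \<omega> in M. 0 \<le> real_cond_exp M (Fn n) f \<omega>"
  proof (rule S.real_cond_exp_pos[OF _ fm])
    show "AE \<omega> in M. 0 \<le> f \<omega>"
      using AE_D
    proof eventually_elim
      case (elim \<omega>)
      have "c + Dr (k + n) \<omega> > 0" using elim D0_pos cd by (meson add_nonneg_pos less_le_trans)
      then have "1 / (d + Dr (k + n) \<omega>) \<le> 1 / (c + Dr (k + n) \<omega>)" using cd by (intro inv_antimono) auto
      then show ?case unfolding f_def by simp
    qed
  qed
  show ?thesis using le ge unfolding f_def T_def Tf_def by eventually_elim auto
qed

end

theorem lemmaA1:
  fixes M :: "'w measure" and \<mu> \<nu> :: "real measure"
    and m0 \<beta> m x y :: real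
    and U V W :: "nat \<Rightarrow> 'w \<Rightarrow> real"
  assumes m0_pos: "0 < m0" and m0_le: "m0 \<le> \<beta>"
    and mu: "prob_on_interval \<beta> \<mu>" and nu: "prob_on_interval \<beta> \<nu>"
    and mean_mu: "(\<integral>t. t \<partial>\<mu>) = m" and mean_nu: "(\<integral>t. t \<partial>\<nu>) = m"
    and m_ge: "m0 \<le> m"
    and init: "x \<ge> 0" "y \<ge> 0" "(x, y) \<noteq> (0, 0)"
    and M: "prob_space M"
    and U_indep: "prob_space.indep_vars M (\<lambda>_. borel) U UNIV"
    and U_unif: "\<And>n. distr M borel (U n) = uniform_measure lborel {0..1}"
    and VW_indep: "prob_space.indep_vars M (\<lambda>_. borel \<Otimes>\<^sub>M borel) (\<lambda>n \<omega>. (V n \<omega>, W n \<omega>)) UNIV"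
    and VW_ident: "\<And>n. distr M (borel \<Otimes>\<^sub>M borel) (\<lambda>\<omega>. (V n \<omega>, W n \<omega>))
                      = distr M (borel \<Otimes>\<^sub>M borel) (\<lambda>\<omega>. (V 0 \<omega>, W 0 \<omega>))"
    and V_unif: "\<And>n. distr M borel (V n) = uniform_measure lborel {0..1}"
    and W_unif: "\<And>n. distr M borel (W n) = uniform_measure lborel {0..1}"
    and U_VW_indep: "prob_space.indep_set M
        (sets (vimage_algebra (space M) (\<lambda>\<omega> n. U n \<omega>) (Pi\<^sub>M UNIV (\<lambda>_. borel))))
        (sets (vimage_algebra (space M) (\<lambda>\<omega> n. (V n \<omega>, W n \<omega>))
                 (Pi\<^sub>M UNIV (\<lambda>_. borel \<Otimes>\<^sub>M borel))))"
  shows "(\<forall>k\<ge>1. (\<integral>\<omega>. 1 / rru_D \<mu> \<nu> x y U V W k \<omega> \<partial>M)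
            \<le> (1 + (\<beta> - m) / (x + y)) / ((x + y) + m * (real k - 1) + \<beta>))
       \<and> (x + y \<ge> 2 * \<beta> \<longrightarrow>
         (\<forall>k\<ge>1. \<forall>n\<ge>1. \<forall>c d. 0 \<le> c \<and> c \<le> d \<longrightarrow>
           (AE \<omega> in M.
              \<bar>real_cond_exp M (rru_filt M \<mu> \<nu> x y U V W n)
                 (\<lambda>\<omega>. 1 / (c + rru_D \<mu> \<nu> x y U V W (k + n) \<omega>)
                      - 1 / (d + rru_D \<mu> \<nu> x y U V W (k + n) \<omega>)) \<omega>\<bar>
              \<le> (\<beta> - m + d) / m *
                 (1 / (c + rru_D \<mu> \<nu> x y U V W n \<omega> - \<beta> + m * real k)
                  - 1 / (c + rru_D \<mu> \<nu> x y U V W n \<omega> - \<beta> + m * real (k + 1))))))"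
proof -
  interpret rru_setting M \<mu> \<nu> m0 \<beta> m x y U V W
    by (rule rru_setting.intro) (use assms in auto)
  show ?thesis using part1 part2 by auto
qed


end
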